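(* Let $k\geq2$ and let $L=(l_1,\dots,l_k)$ be generic and reduced positive integers with sum $n$. Let $\Lambda_L=\widehat{\omega}(H_1(Tonn^{n,k}(L);\mathbb{Z}))\subseteq\Lambda$. Then $$\Lambda_L=\Big\{p_1a_1+\dots+p_ka_k : p\in\mathbb{Z}^k,\ \exists p_0\in\mathbb{Z},\ p_1l_1+\dots+p_kl_k=p_0n\Big\},$$ $\Lambda_L$ is free abelian of rank $k-1$, it acts freely by translations on $\mathcal{D}_\Lambda$, and $Tonn^{n,k}(L)$ is isomorphic as a simplicial complex to the quotient $\mathcal{D}_\Lambda/\Lambda_L$.
   Context: The generalized tonnetz $Tonn^{n,k}(L)$ is the simplicial complex on vertex set $\mathbb{Z}_n$ whose maximal simplices are $\Delta(x;\sigma)=\{x,\,x+l_{\sigma(1)},\dots,x+l_{\sigma(1)}+\dots+l_{\sigma(k-1)}\}$ for $x\in\mathbb{Z}_n$, $\sigma\in S_k$. $L$ is generic if for all $I,J\subseteq[k]$, $\sum_{i\in I}l_i=\sum_{j\in J}l_j$ implies $I=J$; reduced if $\gcd(l_1,\dots,l_k)=1$. $a_i=ke_i-(1,\dots,1)\in\mathbb{Z}^k$, $a_I=\sum_{i\in I}a_i$. The vector 1-cocycle $\omega$ assigns to an oriented 1-simplex $(u,v)$ with $v-u\equiv\sum_{j\in I}l_j\pmod n$ ($I$ nonempty, unique by genericity) the vector $a_I$; $\widehat\omega:H_1(Tonn^{n,k}(L);\mathbb{Z})\to\Lambda$ is evaluation of $\omega$ on cycles. $\Lambda=\{x\in\mathbb{Z}^k:\sum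 x_i=0,\text{ all }x_i\text{ congruent mod }k\}$. $\mathcal{D}_\Lambda$ is the simplicial complex with vertex set $\Lambda$ whose simplices are the sets $\{z+a_{I_1},\dots,z+a_{I_s}\}$ with $z\in\Lambda$ and $I_1\subsetneq\dots\subsetneq I_s\subsetneq[k]$ (the Delone triangulation of the hyperplane $\sum x_i=0$). *)

theory Defs
  imports "HOL-Analysis.Analysis"
begin

text \<open>Indices of L are 0..k-1 (the paper uses 1..k). Vectors in Z^k are
  functions nat => int vanishing outside {..<k}. The vertex set Z_n is {0..<n} :: int set.
  Simplicial complexes are given by their sets of nonempty simplices (finite vertex sets).\<close>

definition vec :: "nat \<Rightarrow> (nat \<Rightarrow> int) set" where
  "vec k = {x. \<forall>i. k \<le> i \<longrightarrow> x i = 0}"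

definition vadd :: "(nat \<Rightarrow> int) \<Rightarrow> (nat \<Rightarrow> int) \<Rightarrow> (nat \<Rightarrow> int)" where
  "vadd x y = (\<lambda>i. x i + y i)"

definition avec :: "nat \<Rightarrow> nat \<Rightarrow> (nat \<Rightarrow> int)" where
  "avec k i = (\<lambda>j. if j < k then (if j = i then int k else 0) - 1 else 0)"

definition aset :: "nat \<Rightarrow> nat set \<Rightarrow> (nat \<Rightarrow> int)" where
  "aset k I = (\<lambda>j. \<Sum>i\<in>I. avec k i j)"

definition Lam :: "nat \<Rightarrow> (nat \<Rightarrow> int) set" where
  "Lam k = {x \<in> vec k. (\<Sum>i<k. x i) = 0 \<and> (\<forall>i<k. \<forall>j<k. x i mod int k = x j mod int k)}"

definition generic :: "nat \<Rightarrow> (nat \<Rightarrow> int) \<Rightarrow> bool" where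
  "generic k l \<longleftrightarrow> (\<forall>I J. I \<subseteq> {..<k} \<longrightarrow> J \<subseteq> {..<k} \<longrightarrow>
      (\<Sum>i\<in>I. l i) = (\<Sum>j\<in>J. l j) \<longrightarrow> I = J)"

definition reduced :: "nat \<Rightarrow> (nat \<Rightarrow> int) \<Rightarrow> bool" where
  "reduced k l \<longleftrightarrow> Gcd (l ` {..<k}) = 1"

definition tonn_max :: "int \<Rightarrow> nat \<Rightarrow> (nat \<Rightarrow> int) \<Rightarrow> int \<Rightarrow> (nat \<Rightarrow> nat) \<Rightarrow> int set" where
  "tonn_max n k l x \<sigma> = {(x + (\<Sum>j<m. l (\<sigma> j))) mod n | m. m < k}"

definition tonn :: "int \<Rightarrow> nat \<Rightarrow> (nat \<Rightarrow> int) \<Rightarrow> int set set" where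
  "tonn n k l = {S. S \<noteq> {} \<and> (\<exists>x \<in> {0..<n}. \<exists>\<sigma>. \<sigma> permutes {..<k} \<and> S \<subseteq> tonn_max n k l x \<sigma>)}"

definition omega :: "int \<Rightarrow> nat \<Rightarrow> (nat \<Rightarrow> int) \<Rightarrow> int \<Rightarrow> int \<Rightarrow> (nat \<Rightarrow> int)" where
  "omega n k l u v = aset k (THE I. I \<subseteq> {..<k} \<and> I \<noteq> {} \<and>
       (v - u) mod n = (\<Sum>j\<in>I. l j) mod n)"

text \<open>Integral simplicial 1-cycles of Tonn: integer coefficients on the 1-simplices {u,v},
  oriented as (u,v) with u < v, with vanishing boundary.\<close>
definition tonn_cycles :: "int \<Rightarrow> nat \<Rightarrow> (nat \<Rightarrow> int) \<Rightarrow> (int \<times> int \<Rightarrow> int) set" where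
  "tonn_cycles n k l = {c.
     (\<forall>u v. c (u, v) \<noteq> 0 \<longrightarrow> u \<in> {0..<n} \<and> v \<in> {0..<n} \<and> u < v \<and> {u, v} \<in> tonn n k l) \<and>
     (\<forall>w \<in> {0..<n}. (\<Sum>u\<in>{0..<n}. c (u, w)) - (\<Sum>v\<in>{0..<n}. c (w, v)) = 0)}"

definition omega_eval :: "int \<Rightarrow> nat \<Rightarrow> (nat \<Rightarrow> int) \<Rightarrow> (int \<times> int \<Rightarrow> int) \<Rightarrow> (nat \<Rightarrow> int)" where
  "omega_eval n k l c = (\<lambda>j. \<Sum>u\<in>{0..<n}. \<Sum>v\<in>{0..<n}. c (u, v) * omega n k l u v j)"

text \<open>Lambda_L = image of H_1 under omega-hat (= image of the 1-cycles, as H_1 = Z_1/B_1)\<close>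
definition LamL :: "int \<Rightarrow> nat \<Rightarrow> (nat \<Rightarrow> int) \<Rightarrow> (nat \<Rightarrow> int) set" where
  "LamL n k l = omega_eval n k l ` tonn_cycles n k l"

definition delone :: "nat \<Rightarrow> (nat \<Rightarrow> int) set set" where
  "delone k = {(\<lambda>I. vadd z (aset k I)) ` C | z C. z \<in> Lam k \<and> C \<noteq> {} \<and>
      (\<forall>I\<in>C. I \<subset> {..<k}) \<and> (\<forall>I\<in>C. \<forall>J\<in>C. I \<subseteq> J \<or> J \<subseteq> I)}"

definition free_abelian_rank :: "(nat \<Rightarrow> int) set \<Rightarrow> nat \<Rightarrow> bool" where
  "free_abelian_rank S r \<longleftrightarrow> (\<exists>b :: nat \<Rightarrow> nat \<Rightarrow> int.
      (\<forall>j<r. b j \<in> S) \<and>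
      S = {(\<lambda>i. \<Sum>j<r. c j * b j i) | c. True} \<and>
      (\<forall>c. (\<lambda>i. \<Sum>j<r. c j * b j i) = (\<lambda>i. 0) \<longrightarrow> (\<forall>j<r. c j = 0)))"

definition acts_freely_by_translations ::
  "(nat \<Rightarrow> int) set \<Rightarrow> (nat \<Rightarrow> int) set \<Rightarrow> (nat \<Rightarrow> int) set set \<Rightarrow> bool" where
  "acts_freely_by_translations G V D \<longleftrightarrow>
     (\<forall>g\<in>G. bij_betw (vadd g) V V \<and> (\<forall>S\<subseteq>V. S \<in> D \<longleftrightarrow> vadd g ` S \<in> D)) \<and>
     (\<forall>g\<in>G. \<forall>S\<in>D. vadd g ` S = S \<longrightarrow> g = (\<lambda>i. 0))"

definition orbit :: "(nat \<Rightarrow> int) set \<Rightarrow> (nat \<Rightarrow> int) \<Rightarrow> (nat \<Rightarrow> int) set" where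
  "orbit G x = {vadd x g | g. g \<in> G}"

definition quot_vertices :: "(nat \<Rightarrow> int) set \<Rightarrow> (nat \<Rightarrow> int) set \<Rightarrow> (nat \<Rightarrow> int) set set" where
  "quot_vertices G V = orbit G ` V"

definition quot_simplices :: "(nat \<Rightarrow> int) set \<Rightarrow> (nat \<Rightarrow> int) set set \<Rightarrow> (nat \<Rightarrow> int) set set set" where
  "quot_simplices G D = {orbit G ` S | S. S \<in> D}"

definition simplicial_iso :: "'a set \<Rightarrow> 'a set set \<Rightarrow> 'b set \<Rightarrow> 'b set set \<Rightarrow> ('a \<Rightarrow> 'b) \<Rightarrow> bool" where
  "simplicial_iso V1 K1 V2 K2 f \<longleftrightarrow> bij_betw f V1 V2 \<and> (\<forall>S\<subseteq>V1. S \<in> K1 \<longleftrightarrow> f ` S \<in> K2)"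

end

theory Submission
  imports Defs
begin

definition comb :: "nat \<Rightarrow> (nat \<Rightarrow> int) \<Rightarrow> nat \<Rightarrow> int" where
  "comb k p = (\<lambda>j. \<Sum>i<k. p i * avec k i j)"

lemma comb_eq: "comb k p j = (if j < k then int k * p j - (\<Sum>i<k. p i) else 0)"
proof (cases "j < k")
  case True
  have "comb k p j = (\<Sum>i<k. p i * (if j = i then int k else 0) - p i)"
    unfolding comb_def avec_def using True by (simp add: algebra_simps)
  also have "\<dots> = (\<Sum>i<k. p i * (if j = i then int k else 0)) - (\<Sum>i<k. p i)"
    by (simp add: sum_subtractf)
  also have "(\<Sum>i<k. p i * (if j = i then int k else 0)) = int k * p j"
    using True by (simp add: if_distrib cong: if_cong)
  finally show ?thesis using True by simp
qed (simp add: comb_def avec_def)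

lemma comb_add: "vadd (comb k p) (comb k q) = comb k (\<lambda>i. p i + q i)"
  by (rule ext) (simp add: vadd_def comb_eq sum.distrib algebra_simps)

lemma comb_neg: "(\<lambda>i. - comb k p i) = comb k (\<lambda>i. - p i)"
  by (rule ext) (simp add: comb_eq sum_negf algebra_simps)

lemma comb_shift: "comb k (\<lambda>i. p i + t) = comb k p"
  by (rule ext) (simp add: comb_eq sum.distrib algebra_simps)

lemma comb_inj:
  assumes "comb k p = comb k q" "0 < k"
  shows "\<exists>t. \<forall>i<k. p i = q i + t"
proof -
  have h: "\<And>j. j < k \<Longrightarrow> int k * p j - (\<Sum>i<k. p i) = int k * q j - (\<Sum>i<k. q i)"
    using assms(1) by (metis comb_eq)
  have "\<forall>i<k. p i = q i + (p 0 - q 0)"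
  proof (intro allI impI)
    fix i assume "i < k"
    from h[OF this] h[OF assms(2)] have "int k * (p i - q i) = int k * (p 0 - q 0)"
      by (simp add: algebra_simps)
    thus "p i = q i + (p 0 - q 0)" using assms(2) by simp
  qed
  thus ?thesis by blast
qed

lemma comb_vec: "comb k p \<in> vec k"
  by (simp add: vec_def comb_eq)

lemma aset_comb:
  assumes "I \<subseteq> {..<k}"
  shows "aset k I = comb k (\<lambda>i. if i \<in> I then 1 else 0)"
proof (rule ext)
  fix j
  have "(\<Sum>i<k. (if i \<in> I then 1 else 0) * avec k i j) = (\<Sum>i\<in>{..<k} \<inter> I. avec k i j)"
    by (simp add: sum.inter_restrict if_distrib[of "\<lambda>c. c * avec k _ j"] cong: if_cong)
  also have "{..<k} \<inter> I = I" using assms by blast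
  finally show "aset k I j = comb k (\<lambda>i. if i \<in> I then 1 else 0) j"
    by (simp add: aset_def comb_def)
qed

lemma Lam_iff:
  assumes "0 < k"
  shows "x \<in> Lam k \<longleftrightarrow> (\<exists>p. x = comb k p)"
proof
  assume x: "x \<in> Lam k"
  have xv: "\<And>i. k \<le> i \<Longrightarrow> x i = 0" using x unfolding Lam_def vec_def by blast
  have xs: "(\<Sum>i<k. x i) = 0" using x unfolding Lam_def by blast
  have xm: "\<And>i j. i < k \<Longrightarrow> j < k \<Longrightarrow> x i mod int k = x j mod int k"
    using x unfolding Lam_def by blast
  define p where "p = (\<lambda>i. (x i - x 0) div int k)"
  have dv: "\<And>i. i < k \<Longrightarrow> int k dvd (x i - x 0)"
    using xm assms by (simp add: mod_eq_dvd_iff)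
  have pk: "\<And>i. i < k \<Longrightarrow> int k * p i = x i - x 0"
    using dv by (simp add: p_def)
  have "int k * (\<Sum>i<k. p i) = (\<Sum>i<k. int k * p i)" by (simp add: sum_distrib_left)
  also have "\<dots> = (\<Sum>i<k. x i - x 0)" using pk by simp
  also have "\<dots> = - int k * x 0" using xs by (simp add: sum_subtractf)
  finally have "int k * (\<Sum>i<k. p i) = int k * (- x 0)" by simp
  moreover have "int k \<noteq> 0" using assms by simp
  ultimately have "(\<Sum>i<k. p i) = - x 0" by (metis mult_cancel_left)
  hence "x = comb k p"
  proof (intro ext)
    fix j assume sp: "(\<Sum>i<k. p i) = - x 0"
    show "x j = comb k p j"
    proof (cases "j < k")
      case True
      have "comb k p j = int k * p j - (\<Sum>i<k. p i)" using True by (simp only: comb_eq if_True)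
      also have "\<dots> = x j" using pk[OF True] sp by simp
      finally show ?thesis by simp
    qed (simp add: comb_eq xv)
  qed
  thus "\<exists>p. x = comb k p" by blast
next
  assume "\<exists>p. x = comb k p"
  then obtain p where x: "x = comb k p" by blast
  have "(\<Sum>i<k. x i) = (\<Sum>i<k. int k * p i - (\<Sum>i<k. p i))"
    by (rule sum.cong) (simp_all add: x comb_eq)
  also have "\<dots> = (\<Sum>i<k. int k * p i) - int k * (\<Sum>i<k. p i)"
    by (simp add: sum_subtractf)
  also have "\<dots> = 0" by (simp add: sum_distrib_left)
  finally have s: "(\<Sum>i<k. x i) = 0" .
  have "\<And>i j. i < k \<Longrightarrow> j < k \<Longrightarrow> x i mod int k = x j mod int k"
  proof -
    fix i j assume "i < k" "j < k"
    have "x i = (p i - p j) * int k + x j" by (simp add: x comb_eq \<open>i<k\<close> \<open>j<k\<close> algebra_simps)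
    thus "x i mod int k = x j mod int k" by simp
  qed
  thus "x \<in> Lam k" using s comb_vec[of k p] unfolding Lam_def x by blast
qed

lemma avec_sum0: "(\<Sum>i<k. avec k i j) = 0"
proof -
  have "comb k (\<lambda>i. 1) j = 0" by (simp add: comb_eq)
  thus ?thesis by (simp add: comb_def)
qed

definition grp :: "(nat \<Rightarrow> int) set \<Rightarrow> bool" where
  "grp H \<longleftrightarrow> (\<lambda>_. 0) \<in> H \<and> (\<forall>x\<in>H. \<forall>y\<in>H. vadd x y \<in> H) \<and> (\<forall>x\<in>H. (\<lambda>i. - x i) \<in> H)"

lemma grp_smult_nat:
  assumes "grp H" "x \<in> H" shows "(\<lambda>i. int t * x i) \<in> H"
proof (induction t)
  case 0 thus ?case using assms by (simp add: grp_def)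
next
  case (Suc t)
  have "vadd x (\<lambda>i. int t * x i) \<in> H" using Suc assms unfolding grp_def by blast
  moreover have "vadd x (\<lambda>i. int t * x i) = (\<lambda>i. int (Suc t) * x i)"
    by (simp add: vadd_def algebra_simps)
  ultimately show ?case by simp
qed

lemma grp_smult:
  assumes "grp H" "x \<in> H" shows "(\<lambda>i. t * x i) \<in> H"
proof (cases "t \<ge> 0")
  case True
  obtain m where "t = int m" using True by (intro that[of "nat t"]) simp
  thus ?thesis using grp_smult_nat[OF assms] by simp
next
  case False
  obtain m where m: "t = - int m" using False by (intro that[of "nat (- t)"]) simp
  have n: "\<forall>x\<in>H. (\<lambda>i. - x i) \<in> H" using assms(1) unfolding grp_def by blast
  have "(\<lambda>i. - (int m * x i)) \<in> H" using n[rule_format, OF grp_smult_nat[OF assms, of m]] by simp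
  thus ?thesis using m by simp
qed

lemma grp_sum:
  assumes "grp H" "finite A" "\<forall>j\<in>A. f j \<in> H"
  shows "(\<lambda>i. \<Sum>j\<in>A. f j i) \<in> H"
  using assms(2,3)
proof (induction A rule: finite_induct)
  case empty thus ?case using assms(1) by (simp add: grp_def)
next
  case (insert a A)
  hence "vadd (f a) (\<lambda>i. \<Sum>j\<in>A. f j i) \<in> H" using assms(1) unfolding grp_def by blast
  thus ?case using insert by (simp add: vadd_def)
qed

lemma grp_lin:
  fixes m :: nat
  assumes "grp H" "\<forall>j<m. b j \<in> H"
  shows "(\<lambda>i. \<Sum>j<m. c j * b j i) \<in> H"
proof -
  have "\<forall>j\<in>{..<m}. (\<lambda>i. c j * b j i) \<in> H" using grp_smult[OF assms(1)] assms(2) by blast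
  from grp_sum[of H "{..<m}" "\<lambda>j i. c j * b j i", OF assms(1) finite_lessThan this] show ?thesis .
qed

lemma grp_diff:
  assumes "grp H" "x \<in> H" "y \<in> H" shows "(\<lambda>i. x i - y i) \<in> H"
proof -
  have "vadd x (\<lambda>i. - y i) \<in> H" using assms unfolding grp_def by blast
  thus ?thesis by (simp add: vadd_def)
qed

lemma free_sub:
  assumes "H \<subseteq> vec m" "grp H" "d > 0"
    "\<forall>i<m. (\<lambda>j. if j = i then d else 0) \<in> H"
  shows "\<exists>b :: nat \<Rightarrow> nat \<Rightarrow> int. (\<forall>j<m. b j \<in> H) \<and>
      H = {(\<lambda>i. \<Sum>j<m. c j * b j i) | c. True} \<and>
      (\<forall>c. (\<lambda>i. \<Sum>j<m. c j * b j i) = (\<lambda>i. 0) \<longrightarrow> (\<forall>j<m. c j = 0))"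
  using assms
proof (induction m arbitrary: H)
  case 0
  have "H = {\<lambda>i. 0}"
  proof -
    have "\<And>x. x \<in> H \<Longrightarrow> x = (\<lambda>i. 0)" using 0(1) by (auto simp: vec_def)
    thus ?thesis using 0(2) unfolding grp_def by blast
  qed
  hence "H = {(\<lambda>i. \<Sum>j<0. c j * (\<lambda>_ _. 0::int) j i) | c. True}" by simp
  thus ?case using \<open>H = {\<lambda>i. 0}\<close> by (intro exI[of _ "\<lambda>_ _. 0"] conjI) simp_all
next
  case (Suc m)
  note H = Suc.prems
  define H' where "H' = H \<inter> vec m"
  have gH': "grp H'"
  proof -
    have z: "(\<lambda>_. 0) \<in> H" and a: "\<forall>x\<in>H. \<forall>y\<in>H. vadd x y \<in> H"
      and n: "\<forall>x\<in>H. (\<lambda>i. - x i) \<in> H" using H(2) unfolding grp_def by blast+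
    have "(\<lambda>_. 0) \<in> H'" using z by (simp add: H'_def vec_def)
    moreover have "\<forall>x\<in>H'. \<forall>y\<in>H'. vadd x y \<in> H'"
      using a by (simp add: H'_def vec_def vadd_def)
    moreover have "\<forall>x\<in>H'. (\<lambda>i. - x i) \<in> H'"
      using n by (simp add: H'_def vec_def)
    ultimately show ?thesis unfolding grp_def by blast
  qed
  have "\<forall>i<m. (\<lambda>j. if j = i then d else 0) \<in> H'"
    using H(4) by (auto simp: H'_def vec_def)
  moreover have "H' \<subseteq> vec m" by (simp add: H'_def)
  ultimately obtain b' where b'H: "\<forall>j<m. b' j \<in> H'"
    and b'span: "H' = {(\<lambda>i. \<Sum>j<m. c j * b' j i) | c. True}"
    and b'ind: "\<forall>c. (\<lambda>i. \<Sum>j<m. c j * b' j i) = (\<lambda>i. 0) \<longrightarrow> (\<forall>j<m. c j = 0)"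
    using Suc.IH[OF _ gH' H(3)] by blast
  define G where "G = (\<lambda>x. x m) ` H"
  have "(\<lambda>j. if j = m then d else 0) \<in> H" using H(4) by blast
  from imageI[OF this, of "\<lambda>x. x m"] have dG: "d \<in> G" unfolding G_def by simp
  have Gmult: "\<And>y t. y \<in> G \<Longrightarrow> t * y \<in> G"
  proof -
    fix y t assume "y \<in> G"
    then obtain x where x: "x \<in> H" "y = x m" unfolding G_def by blast
    from imageI[OF grp_smult[OF H(2) x(1), of t], of "\<lambda>x. x m"] x(2)
    show "t * y \<in> G" unfolding G_def by simp
  qed
  have Gdiff: "\<And>y z. y \<in> G \<Longrightarrow> z \<in> G \<Longrightarrow> y - z \<in> G"
  proof -
    fix y z assume "y \<in> G" "z \<in> G"
    then obtain x x' where x: "x \<in> H" "y = x m" "x' \<in> H" "z = x' m" unfolding G_def by blast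
    from imageI[OF grp_diff[OF H(2) x(1) x(3)], of "\<lambda>x. x m"] x
    show "y - z \<in> G" unfolding G_def by simp
  qed
  define g0 where "g0 = (LEAST t::nat. t > 0 \<and> int t \<in> G)"
  have ex: "\<exists>t::nat. t > 0 \<and> int t \<in> G" using dG H(3)
    by (intro exI[of _ "nat d"]) simp
  have g0: "g0 > 0 \<and> int g0 \<in> G" unfolding g0_def using LeastI_ex[OF ex] .
  have g0min: "\<And>t::nat. t > 0 \<Longrightarrow> int t \<in> G \<Longrightarrow> g0 \<le> t"
    unfolding g0_def by (rule Least_le) simp
  define g where "g = int g0"
  have gpos: "g > 0" and gG: "g \<in> G" using g0 by (auto simp: g_def)
  have gdvd: "\<And>y. y \<in> G \<Longrightarrow> y = (y div g) * g"
  proof -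
    fix y assume y: "y \<in> G"
    have r: "y mod g \<in> G"
      using Gdiff[OF y Gmult[OF gG, of "y div g"]] by (metis minus_div_mult_eq_mod)
    have "y mod g = 0"
    proof (rule ccontr)
      assume ne: "y mod g \<noteq> 0"
      have "y mod g > 0" using pos_mod_sign[OF gpos, of y] ne by linarith
      hence "g0 \<le> nat (y mod g)" using g0min[of "nat (y mod g)"] r by simp
      moreover have "y mod g < g" using gpos by simp
      ultimately show False using \<open>y mod g > 0\<close> le_nat_iff[of "y mod g" g0] by (simp add: g_def)
    qed
    thus "y = (y div g) * g" by (metis add.right_neutral mult_div_mod_eq mult.commute)
  qed
  obtain h where hH: "h \<in> H" and hm0: "g = h m" using gG unfolding G_def by (rule imageE)
  note hm = hm0[symmetric]
  define b where "b = b'(m := h)"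
  have bH: "\<forall>j<Suc m. b j \<in> H"
  proof (intro allI impI)
    fix j assume j: "j < Suc m"
    show "b j \<in> H"
    proof (cases "j = m")
      case True thus ?thesis using hH by (simp add: b_def)
    next
      case False
      hence "j < m" using j by simp
      hence "b' j \<in> H'" using b'H by blast
      thus ?thesis using False by (simp add: b_def H'_def)
    qed
  qed
  have b'm: "\<And>j. j < m \<Longrightarrow> b' j m = 0"
  proof -
    fix j assume "j < m"
    hence "b' j \<in> vec m" using b'H unfolding H'_def by blast
    thus "b' j m = 0" unfolding vec_def by blast
  qed
  have lin_split: "\<And>c i. (\<Sum>j<Suc m. c j * b j i) = (\<Sum>j<m. c j * b' j i) + c m * h i"
  proof -
    fix c i
    have "(\<Sum>j<Suc m. c j * b j i) = (\<Sum>j<m. c j * b j i) + c m * b m i"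
      by (rule sum.lessThan_Suc)
    also have "(\<Sum>j<m. c j * b j i) = (\<Sum>j<m. c j * b' j i)"
      by (rule sum.cong) (simp_all add: b_def)
    finally show "(\<Sum>j<Suc m. c j * b j i) = (\<Sum>j<m. c j * b' j i) + c m * h i"
      by (simp add: b_def)
  qed
  have lin_m: "\<And>c. (\<Sum>j<Suc m. c j * b j m) = c m * g"
  proof -
    fix c
    have "(\<Sum>j<m. c j * b' j m) = 0" using b'm by simp
    thus "(\<Sum>j<Suc m. c j * b j m) = c m * g" using lin_split[of c m] hm by simp
  qed
  have span: "H = {(\<lambda>i. \<Sum>j<Suc m. c j * b j i) | c. True}"
  proof
    show "H \<subseteq> {(\<lambda>i. \<Sum>j<Suc m. c j * b j i) | c. True}"
    proof
      fix x assume x: "x \<in> H"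
      define t where "t = x m div g"
      have "x m \<in> G" unfolding G_def using x by (rule imageI)
      hence xm: "x m = t * g" using gdvd[of "x m"] unfolding t_def by simp
      define x' where "x' = (\<lambda>i. x i - t * h i)"
      have x'H: "x' \<in> H" unfolding x'_def using grp_diff[OF H(2) x grp_smult[OF H(2) hH]] .
      have "x' \<in> vec m"
      proof -
        have "\<And>i. m \<le> i \<Longrightarrow> x' i = 0"
        proof -
          fix i assume "m \<le> i"
          show "x' i = 0"
          proof (cases "i = m")
            case True thus ?thesis by (simp add: x'_def xm hm)
          next
            case False
            hence "Suc m \<le> i" using \<open>m \<le> i\<close> by simp
            have "x \<in> vec (Suc m)" "h \<in> vec (Suc m)" using x hH H(1) by blast+
            hence "x i = 0" "h i = 0" using \<open>Suc m \<le> i\<close> unfolding vec_def by blast+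
            thus ?thesis by (simp add: x'_def)
          qed
        qed
        thus ?thesis by (simp add: vec_def)
      qed
      hence "x' \<in> H'" using x'H by (simp add: H'_def)
      then obtain c' where c': "x' = (\<lambda>i. \<Sum>j<m. c' j * b' j i)" using b'span by blast
      have "x = (\<lambda>i. \<Sum>j<Suc m. (c'(m := t)) j * b j i)"
      proof
        fix i
        have "x i = x' i + t * h i" by (simp add: x'_def)
        also have "\<dots> = (\<Sum>j<m. c' j * b' j i) + t * h i" by (simp add: c')
        also have "(\<Sum>j<m. c' j * b' j i) = (\<Sum>j<m. (c'(m := t)) j * b' j i)"
          by (rule sum.cong) auto
        finally show "x i = (\<Sum>j<Suc m. (c'(m := t)) j * b j i)"
          by (simp only: lin_split) simp
      qed
      thus "x \<in> {(\<lambda>i. \<Sum>j<Suc m. c j * b j i) | c. True}"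
        by (intro CollectI exI[of _ "c'(m := t)"]) simp
    qed
  next
    show "{(\<lambda>i. \<Sum>j<Suc m. c j * b j i) | c. True} \<subseteq> H"
    proof
      fix y assume "y \<in> {(\<lambda>i. \<Sum>j<Suc m. c j * b j i) | c. True}"
      then obtain c where "y = (\<lambda>i. \<Sum>j<Suc m. c j * b j i)" by blast
      thus "y \<in> H" using grp_lin[OF H(2) bH, of c] by simp
    qed
  qed
  have ind: "\<forall>c. (\<lambda>i. \<Sum>j<Suc m. c j * b j i) = (\<lambda>i. 0) \<longrightarrow> (\<forall>j<Suc m. c j = 0)"
  proof (rule allI, rule impI)
    fix c assume z: "(\<lambda>i. \<Sum>j<Suc m. c j * b j i) = (\<lambda>i. 0)"
    have "c m * g = 0" using fun_cong[OF z, of m] lin_m by simp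
    hence cm: "c m = 0" using gpos by simp
    have "(\<lambda>i. \<Sum>j<m. c j * b' j i) = (\<lambda>i. 0)"
    proof
      fix i show "(\<Sum>j<m. c j * b' j i) = 0" using fun_cong[OF z, of i] lin_split[of c i] cm by simp
    qed
    hence "\<forall>j<m. c j = 0" using b'ind by blast
    thus "\<forall>j<Suc m. c j = 0" using cm less_Suc_eq by auto
  qed
  show ?case using bH span ind by (intro exI[of _ b] conjI) (assumption+)
qed

locale tz =
  fixes k :: nat and l :: "nat \<Rightarrow> int" and n :: int
  assumes k2: "k \<ge> 2" and lpos: "\<forall>i<k. l i > 0" and gen: "generic k l"
    and red: "reduced k l" and ndef: "n = (\<Sum>i<k. l i)"
begin

lemma kpos: "0 < k" using k2 by simp

lemma l_lt_n: assumes "i < k" shows "0 < l i" "l i < n"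
proof -
  show "0 < l i" using lpos assms by blast
  define j where "j = (if i = 0 then 1 else (0::nat))"
  have j: "j < k" "j \<noteq> i" using k2 by (auto simp: j_def)
  have "n = l i + (\<Sum>x\<in>{..<k} - {i}. l x)" unfolding ndef
    using assms by (simp add: sum.remove)
  moreover have "(\<Sum>x\<in>{..<k} - {i}. l x) \<ge> l j"
    using j lpos by (intro member_le_sum) (auto intro: less_imp_le)
  moreover have "l j > 0" using lpos j by blast
  ultimately show "l i < n" by linarith
qed

lemma npos: "0 < n" using l_lt_n kpos by force

definition P :: "(nat \<Rightarrow> int) set" where
  "P = {comb k p | p. \<exists>p0. (\<Sum>i<k. p i * l i) = p0 * n}"

definition phi :: "(nat \<Rightarrow> int) \<Rightarrow> int" where
  "phi x = (\<Sum>i<k. ((x i - x 0) div int k) * l i) mod n"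

lemma phi_comb: "phi (comb k p) = (\<Sum>i<k. p i * l i) mod n"
proof -
  have "\<And>i. i < k \<Longrightarrow> (comb k p i - comb k p 0) div int k = p i - p 0"
    using kpos by (simp add: comb_eq algebra_simps)
  hence "(\<Sum>i<k. ((comb k p i - comb k p 0) div int k) * l i) = (\<Sum>i<k. (p i - p 0) * l i)"
    by simp
  also have "\<dots> = (\<Sum>i<k. p i * l i) - p 0 * n"
    by (simp add: ndef algebra_simps sum_subtractf sum_distrib_left)
  finally have e: "(\<Sum>i<k. ((comb k p i - comb k p 0) div int k) * l i) = (\<Sum>i<k. p i * l i) + (- p 0) * n"
    by simp
  show ?thesis unfolding phi_def e by (simp only: mod_mult_self1)
qed

lemma phi_range: "0 \<le> phi x" "phi x < n"
  using npos by (auto simp: phi_def)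

lemma Lam_comb: "x \<in> Lam k \<longleftrightarrow> (\<exists>p. x = comb k p)"
  using Lam_iff[OF kpos] .

lemma P_Lam: "P \<subseteq> Lam k"
  unfolding P_def using Lam_comb by blast

lemma P_iff: assumes "x \<in> Lam k" shows "x \<in> P \<longleftrightarrow> phi x = 0"
proof
  assume "x \<in> P"
  then obtain p p0 where "x = comb k p" "(\<Sum>i<k. p i * l i) = p0 * n" unfolding P_def by blast
  thus "phi x = 0" by (simp add: phi_comb)
next
  assume h: "phi x = 0"
  obtain p where x: "x = comb k p" using assms Lam_comb by blast
  hence "(\<Sum>i<k. p i * l i) mod n = 0" using h by (simp add: phi_comb)
  hence "(\<Sum>i<k. p i * l i) = ((\<Sum>i<k. p i * l i) div n) * n" by (metis mult_div_mod_eq add_0 mult.commute add.commute)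
  thus "x \<in> P" unfolding P_def using x by blast
qed

lemma Lam_add: assumes "x \<in> Lam k" "y \<in> Lam k" shows "vadd x y \<in> Lam k"
proof -
  obtain p q where "x = comb k p" "y = comb k q" using assms Lam_comb by blast
  thus ?thesis unfolding Lam_comb by (intro exI[of _ "\<lambda>i. p i + q i"]) (simp add: comb_add)
qed

lemma Lam_neg: assumes "x \<in> Lam k" shows "(\<lambda>i. - x i) \<in> Lam k"
proof -
  obtain p where "x = comb k p" using assms Lam_comb by blast
  thus ?thesis unfolding Lam_comb by (intro exI[of _ "\<lambda>i. - p i"]) (simp add: comb_neg)
qed

lemma phi_add: assumes "x \<in> Lam k" "y \<in> Lam k"
  shows "phi (vadd x y) = (phi x + phi y) mod n"
proof -
  obtain p q where "x = comb k p" "y = comb k q" using assms Lam_comb by blast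
  thus ?thesis by (simp add: comb_add phi_comb sum.distrib algebra_simps mod_add_eq)
qed

lemma phi_neg: assumes "x \<in> Lam k"
  shows "phi (\<lambda>i. - x i) = (- phi x) mod n"
proof -
  obtain p where "x = comb k p" using assms Lam_comb by blast
  thus ?thesis by (simp add: comb_neg phi_comb sum_negf mod_minus_eq)
qed

lemma zero_Lam: "(\<lambda>_. 0) \<in> Lam k"
proof -
  have "(\<lambda>_. 0) = comb k (\<lambda>_. 0)" by (simp add: comb_eq fun_eq_iff)
  thus ?thesis using Lam_comb by blast
qed

lemma phi_zero: "phi (\<lambda>_. 0) = 0" by (simp add: phi_def)

lemma grpP: "grp P"
proof -
  have "(\<lambda>_. 0) \<in> P" using P_iff zero_Lam phi_zero by blast
  moreover have "\<forall>x\<in>P. \<forall>y\<in>P. vadd x y \<in> P"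
  proof (intro ballI)
    fix x y assume "x \<in> P" "y \<in> P"
    hence L: "x \<in> Lam k" "y \<in> Lam k" and z: "phi x = 0" "phi y = 0" using P_Lam P_iff by blast+
    show "vadd x y \<in> P" using P_iff[OF Lam_add[OF L]] phi_add[OF L] z by simp
  qed
  moreover have "\<forall>x\<in>P. (\<lambda>i. - x i) \<in> P"
  proof (intro ballI)
    fix x assume "x \<in> P"
    hence L: "x \<in> Lam k" and z: "phi x = 0" using P_Lam P_iff by blast+
    show "(\<lambda>i. - x i) \<in> P" using P_iff[OF Lam_neg[OF L]] phi_neg[OF L] z by simp
  qed
  ultimately show ?thesis unfolding grp_def by blast
qed

lemma P_add: "x \<in> P \<Longrightarrow> y \<in> P \<Longrightarrow> vadd x y \<in> P"
  using grpP unfolding grp_def by blast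

lemma P_neg: "x \<in> P \<Longrightarrow> (\<lambda>i. - x i) \<in> P"
  using grpP unfolding grp_def by blast

lemma orbit_eq: assumes "x \<in> Lam k" "y \<in> Lam k"
  shows "orbit P x = orbit P y \<longleftrightarrow> phi x = phi y"
proof
  assume "orbit P x = orbit P y"
  moreover have "y \<in> orbit P y" unfolding orbit_def
    using P_iff zero_Lam phi_zero by (intro CollectI exI[of _ "\<lambda>_. 0"]) (simp add: vadd_def)
  ultimately obtain g where g: "g \<in> P" "y = vadd x g" unfolding orbit_def by blast
  hence "phi y = (phi x + phi g) mod n" using phi_add assms P_Lam by blast
  also have "phi g = 0" using g P_iff P_Lam by blast
  finally show "phi x = phi y" using phi_range[of x] by simp
next
  assume e: "phi x = phi y"
  define d where "d = vadd y (\<lambda>i. - x i)"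
  have dL: "d \<in> Lam k" unfolding d_def using assms Lam_add Lam_neg by blast
  have "phi d = (phi y + (- phi x) mod n) mod n" unfolding d_def
    using phi_add phi_neg assms Lam_neg by simp
  hence "phi d = 0" using e by (simp add: mod_add_right_eq)
  hence dP: "d \<in> P" using P_iff dL by blast
  have xy: "y = vadd x d" by (simp add: d_def vadd_def)
  show "orbit P x = orbit P y"
  proof
    show "orbit P x \<subseteq> orbit P y"
    proof
      fix w assume "w \<in> orbit P x"
      then obtain g where g: "g \<in> P" "w = vadd x g" unfolding orbit_def by blast
      have "vadd (\<lambda>i. - d i) g \<in> P" using P_add P_neg dP g(1) by blast
      moreover have "w = vadd y (vadd (\<lambda>i. - d i) g)" using g(2) xy by (simp add: vadd_def)
      ultimately show "w \<in> orbit P y" unfolding orbit_def by blast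
    qed
  next
    show "orbit P y \<subseteq> orbit P x"
    proof
      fix w assume "w \<in> orbit P y"
      then obtain g where g: "g \<in> P" "w = vadd y g" unfolding orbit_def by blast
      have "vadd d g \<in> P" using P_add P_neg dP g(1) by blast
      moreover have "w = vadd x (vadd d g)" using g(2) xy by (simp add: vadd_def add.assoc)
      ultimately show "w \<in> orbit P x" unfolding orbit_def by blast
    qed
  qed
qed

end

context tz begin

definition Tr :: "(nat \<Rightarrow> int) \<Rightarrow> nat \<Rightarrow> int" where
  "Tr x = (\<lambda>i. if i < k - 1 then x i else 0)"

definition Ex :: "(nat \<Rightarrow> int) \<Rightarrow> nat \<Rightarrow> int" where
  "Ex y = (\<lambda>i. if i < k - 1 then y i else if i = k - 1 then - (\<Sum>j<k - 1. y j) else 0)"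

lemma Ex_Tr: assumes "x \<in> Lam k" shows "Ex (Tr x) = x"
proof
  fix i
  have xv: "\<And>i. k \<le> i \<Longrightarrow> x i = 0" using assms unfolding Lam_def vec_def by blast
  have xs: "(\<Sum>i<k. x i) = 0" using assms unfolding Lam_def by blast
  have ks: "k = Suc (k - 1)" using kpos by simp
  have "(\<Sum>i<k. x i) = (\<Sum>i<k - 1. x i) + x (k - 1)"
    by (subst ks, subst sum.lessThan_Suc) simp
  hence xl: "x (k - 1) = - (\<Sum>i<k - 1. x i)" using xs by simp
  have "(\<Sum>j<k - 1. Tr x j) = (\<Sum>j<k - 1. x j)" by (rule sum.cong) (simp_all add: Tr_def)
  thus "Ex (Tr x) i = x i"
    using xl xv[of i] by (auto simp: Ex_def Tr_def)
qed

lemma Tr_Ex: assumes "y \<in> vec (k - 1)" shows "Tr (Ex y) = y"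
  using assms by (auto simp: Tr_def Ex_def vec_def fun_eq_iff)

lemma Ex_lin: "Ex (\<lambda>i. \<Sum>j<m. c j * B j i) = (\<lambda>i. \<Sum>j<m. c j * Ex (B j) i)"
proof
  fix i
  show "Ex (\<lambda>i. \<Sum>j<m. c j * B j i) i = (\<Sum>j<m. c j * Ex (B j) i)"
  proof (cases "i < k - 1")
    case True thus ?thesis by (simp add: Ex_def)
  next
    case False
    show ?thesis
    proof (cases "i = k - 1")
      case True
      have "(\<Sum>i<k - 1. \<Sum>j<m. c j * B j i) = (\<Sum>j<m. c j * (\<Sum>i<k - 1. B j i))"
        by (subst sum.swap) (simp add: sum_distrib_left)
      thus ?thesis using True False by (simp add: Ex_def sum_negf)
    qed (simp add: Ex_def False)
  qed
qed

lemma Tr_lin: "Tr (\<lambda>i. \<Sum>j<m. c j * B j i) = (\<lambda>i. \<Sum>j<m. c j * Tr (B j) i)"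
  by (auto simp: Tr_def fun_eq_iff)

lemma grpH: "grp (Tr ` P)"
proof -
  have "(\<lambda>_. 0) = Tr (\<lambda>_. 0)" by (simp add: Tr_def fun_eq_iff)
  moreover have "(\<lambda>_. 0) \<in> P" using grpP unfolding grp_def by blast
  ultimately have z: "(\<lambda>_. 0) \<in> Tr ` P" by (metis image_eqI)
  have a: "\<forall>x\<in>Tr ` P. \<forall>y\<in>Tr ` P. vadd x y \<in> Tr ` P"
  proof (intro ballI)
    fix x y assume "x \<in> Tr ` P" "y \<in> Tr ` P"
    then obtain x' y' where "x' \<in> P" "y' \<in> P" "x = Tr x'" "y = Tr y'" by blast
    moreover have "vadd (Tr x') (Tr y') = Tr (vadd x' y')" by (simp add: Tr_def vadd_def fun_eq_iff)
    ultimately show "vadd x y \<in> Tr ` P" using P_add by (metis image_eqI)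
  qed
  have ng: "\<forall>x\<in>Tr ` P. (\<lambda>i. - x i) \<in> Tr ` P"
  proof (intro ballI)
    fix x assume "x \<in> Tr ` P"
    then obtain x' where "x' \<in> P" "x = Tr x'" by blast
    moreover have "(\<lambda>i. - Tr x' i) = Tr (\<lambda>i. - x' i)" by (simp add: Tr_def fun_eq_iff)
    ultimately show "(\<lambda>i. - x i) \<in> Tr ` P" using P_neg by (metis image_eqI)
  qed
  show ?thesis unfolding grp_def using z a ng by blast
qed

lemma H_vec: "Tr ` P \<subseteq> vec (k - 1)"
  by (auto simp: Tr_def vec_def)

lemma H_unit: assumes "i < k - 1"
  shows "(\<lambda>j. if j = i then n * int k else 0) \<in> Tr ` P"
proof -
  define p where "p = (\<lambda>j. (if j = i then n else 0) - (if j = k - 1 then n else (0::int)))"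
  have ik: "i < k" "k - 1 < k" "i \<noteq> k - 1" using assms kpos by auto
  have "(\<Sum>j<k. p j * l j) = (\<Sum>j<k. (if j = i then n * l j else 0) - (if j = k - 1 then n * l j else 0))"
    by (rule sum.cong) (auto simp: p_def algebra_simps)
  also have "\<dots> = (\<Sum>j<k. (if j = i then n * l j else 0)) - (\<Sum>j<k. (if j = k - 1 then n * l j else 0))"
    by (rule sum_subtractf)
  also have "\<dots> = (l i - l (k - 1)) * n" using ik by (simp add: algebra_simps)
  finally have "comb k p \<in> P" unfolding P_def by blast
  moreover have "(\<Sum>j<k. p j) = 0" using ik unfolding p_def by (simp add: sum_subtractf)
  hence "Tr (comb k p) = (\<lambda>j. if j = i then n * int k else 0)"
    using ik by (auto simp: Tr_def comb_eq p_def fun_eq_iff)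
  ultimately show ?thesis by (metis image_eqI)
qed

lemma free_P: "free_abelian_rank P (k - 1)"
proof -
  have d: "n * int k > 0" using npos kpos by simp
  obtain B where BH: "\<forall>j<k - 1. B j \<in> Tr ` P"
    and Bspan: "Tr ` P = {(\<lambda>i. \<Sum>j<k - 1. c j * B j i) | c. True}"
    and Bind: "\<forall>c. (\<lambda>i. \<Sum>j<k - 1. c j * B j i) = (\<lambda>i. 0) \<longrightarrow> (\<forall>j<k - 1. c j = 0)"
    using free_sub[OF H_vec grpH d] H_unit by blast
  define b where "b = (\<lambda>j. Ex (B j))"
  have bP: "\<forall>j<k - 1. b j \<in> P"
  proof (intro allI impI)
    fix j assume "j < k - 1"
    then obtain x where "x \<in> P" "B j = Tr x" using BH by blast
    thus "b j \<in> P" using Ex_Tr P_Lam by (auto simp: b_def)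
  qed
  have span: "P = {(\<lambda>i. \<Sum>j<k - 1. c j * b j i) | c. True}"
  proof
    show "P \<subseteq> {(\<lambda>i. \<Sum>j<k - 1. c j * b j i) | c. True}"
    proof
      fix x assume x: "x \<in> P"
      hence "Tr x \<in> Tr ` P" by blast
      then obtain c where c: "Tr x = (\<lambda>i. \<Sum>j<k - 1. c j * B j i)" using Bspan by blast
      have "x = Ex (Tr x)" using Ex_Tr x P_Lam by auto
      also have "\<dots> = (\<lambda>i. \<Sum>j<k - 1. c j * b j i)" unfolding c Ex_lin b_def ..
      finally show "x \<in> {(\<lambda>i. \<Sum>j<k - 1. c j * b j i) | c. True}" by blast
    qed
  next
    show "{(\<lambda>i. \<Sum>j<k - 1. c j * b j i) | c. True} \<subseteq> P"
    proof
      fix y assume "y \<in> {(\<lambda>i. \<Sum>j<k - 1. c j * b j i) | c. True}"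
      then obtain c where y: "y = (\<lambda>i. \<Sum>j<k - 1. c j * b j i)" by blast
      have "(\<lambda>i. \<Sum>j<k - 1. c j * B j i) \<in> Tr ` P" using Bspan by blast
      then obtain x where x: "x \<in> P" "(\<lambda>i. \<Sum>j<k - 1. c j * B j i) = Tr x" by blast
      have "y = Ex (Tr x)" unfolding y b_def Ex_lin[symmetric] x(2) ..
      thus "y \<in> P" using Ex_Tr x(1) P_Lam by auto
    qed
  qed
  have ind: "\<forall>c. (\<lambda>i. \<Sum>j<k - 1. c j * b j i) = (\<lambda>i. 0) \<longrightarrow> (\<forall>j<k - 1. c j = 0)"
  proof (rule allI, rule impI)
    fix c assume z: "(\<lambda>i. \<Sum>j<k - 1. c j * b j i) = (\<lambda>i. 0)"
    have TB: "\<And>j. j < k - 1 \<Longrightarrow> Tr (b j) = B j"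
      unfolding b_def using BH H_vec Tr_Ex by blast
    have "Tr (\<lambda>i. \<Sum>j<k - 1. c j * b j i) = (\<lambda>i. \<Sum>j<k - 1. c j * Tr (b j) i)" by (rule Tr_lin)
    also have "\<dots> = (\<lambda>i. \<Sum>j<k - 1. c j * B j i)" using TB by simp
    finally have e1: "Tr (\<lambda>i. \<Sum>j<k - 1. c j * b j i) = (\<lambda>i. \<Sum>j<k - 1. c j * B j i)" .
    have e2: "Tr (\<lambda>i. \<Sum>j<k - 1. c j * b j i) = (\<lambda>i. 0)" unfolding z by (simp add: Tr_def)
    from e1 e2 have "(\<lambda>i. \<Sum>j<k - 1. c j * B j i) = (\<lambda>i. 0)" by simp
    thus "\<forall>j<k - 1. c j = 0" using Bind by blast
  qed
  show ?thesis unfolding free_abelian_rank_def using bP span ind by (intro exI[of _ b] conjI) (assumption+)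
qed

end

lemma bez: "\<exists>q. (\<Sum>i<m. q i * f i) = Gcd ((f :: nat \<Rightarrow> int) ` {..<m})"
proof (induction m)
  case 0 thus ?case by simp
next
  case (Suc m)
  then obtain q where q: "(\<Sum>i<m. q i * f i) = Gcd (f ` {..<m})" by blast
  obtain u v where uv: "u * f m + v * Gcd (f ` {..<m}) = gcd (f m) (Gcd (f ` {..<m}))"
    using bezout_int by blast
  define q' where "q' = (\<lambda>i. v * q i)(m := u)"
  have "(\<Sum>i<Suc m. q' i * f i) = (\<Sum>i<m. q' i * f i) + q' m * f m" by simp
  also have "(\<Sum>i<m. q' i * f i) = (\<Sum>i<m. v * (q i * f i))"
    by (rule sum.cong) (simp_all add: q'_def)
  also have "\<dots> = v * Gcd (f ` {..<m})" by (simp add: sum_distrib_left[symmetric] q)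
  finally have "(\<Sum>i<Suc m. q' i * f i) = gcd (f m) (Gcd (f ` {..<m}))"
    using uv by (simp add: q'_def algebra_simps)
  moreover have "f ` {..<Suc m} = insert (f m) (f ` {..<m})" by (simp add: lessThan_Suc)
  ultimately show ?case by auto
qed

lemma chain_max:
  assumes "finite C" "C \<noteq> {}" "\<forall>I\<in>C. finite I" "\<forall>I\<in>C. \<forall>J\<in>C. I \<subseteq> J \<or> J \<subseteq> I"
  shows "\<exists>M\<in>C. \<forall>I\<in>C. I \<subseteq> M"
proof -
  have "Max (card ` C) \<in> card ` C" using assms by (intro Max_in) auto
  then obtain M where M: "M \<in> C" "card M = Max (card ` C)" by auto
  have "\<forall>I\<in>C. I \<subseteq> M"
  proof
    fix I assume I: "I \<in> C"
    have "card I \<le> card M" using M assms(1) I by simp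
    show "I \<subseteq> M"
    proof (cases "I \<subseteq> M")
      case False
      hence "M \<subseteq> I" using assms(4) I M(1) by blast
      moreover have "finite I" using assms(3) I by blast
      moreover have "card M \<le> card I" using card_mono calculation by blast
      ultimately have "card M = card I" using \<open>card I \<le> card M\<close> by simp
      hence "M = I" using card_subset_eq[of I M] \<open>finite I\<close> \<open>M \<subseteq> I\<close> by blast
      thus ?thesis by simp
    qed
  qed
  thus ?thesis using M(1) by blast
qed

lemma chain_perm:
  assumes "finite U" "card U = m" "\<forall>I\<in>C. I \<subseteq> U" "\<forall>I\<in>C. \<forall>J\<in>C. I \<subseteq> J \<or> J \<subseteq> I"
  shows "\<exists>\<sigma>. bij_betw \<sigma> {..<m} U \<and> (\<forall>I\<in>C. \<sigma> ` {..<card I} = I)"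
  using assms
proof (induction m arbitrary: U C)
  case 0
  hence "U = {}" by simp
  hence "\<forall>I\<in>C. I = {}" using 0 by blast
  thus ?case using \<open>U = {}\<close> by (intro exI[of _ "\<lambda>_. undefined"]) (auto simp: bij_betw_def)
next
  case (Suc m)
  note A = Suc.prems
  define C' where "C' = C - {U}"
  have "C \<subseteq> Pow U" using A(3) by blast
  hence fC: "finite C" using A(1) by (simp add: finite_subset)
  hence fC': "finite C'" by (simp add: C'_def)
  have finI: "\<forall>I\<in>C'. finite I" using A(1,3) unfolding C'_def by (blast intro: finite_subset)
  have chC': "\<forall>I\<in>C'. \<forall>J\<in>C'. I \<subseteq> J \<or> J \<subseteq> I" using A(4) unfolding C'_def by blast
  have "\<exists>u\<in>U. \<forall>I\<in>C'. u \<notin> I"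
  proof (cases "C' = {}")
    case True
    have "U \<noteq> {}" using A(2) by auto
    thus ?thesis using True by blast
  next
    case False
    obtain M where M: "M \<in> C'" "\<forall>I\<in>C'. I \<subseteq> M"
      using chain_max[OF fC' False finI chC'] by blast
    have "M \<subseteq> U" "M \<noteq> U" using M(1) A(3) unfolding C'_def by auto
    then obtain u where "u \<in> U" "u \<notin> M" by blast
    thus ?thesis using M(2) by blast
  qed
  then obtain u where u: "u \<in> U" "\<forall>I\<in>C'. u \<notin> I" by blast
  define U' where "U' = U - {u}"
  have "card U' = card U - 1" unfolding U'_def using u(1) by (rule card_Diff_singleton)
  hence cU': "card U' = m" using A(2) by simp
  have C'U': "\<forall>I\<in>C'. I \<subseteq> U'"
  proof
    fix I assume I: "I \<in> C'"
    have "I \<in> C" using I unfolding C'_def by simp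
    hence "I \<subseteq> U" using A(3) by simp
    moreover have "u \<notin> I" using u(2) I by simp
    ultimately show "I \<subseteq> U'" unfolding U'_def by blast
  qed
  obtain \<sigma>' where s': "bij_betw \<sigma>' {..<m} U'" "\<forall>I\<in>C'. \<sigma>' ` {..<card I} = I"
    using Suc.IH[OF _ cU' C'U' chC'] A(1) unfolding U'_def by blast
  define \<sigma> where "\<sigma> = \<sigma>'(m := u)"
  have im': "\<And>j. j \<le> m \<Longrightarrow> \<sigma> ` {..<j} = \<sigma>' ` {..<j}"
    by (auto simp: \<sigma>_def)
  have "\<sigma> ` {..<Suc m} = insert (\<sigma> m) (\<sigma> ` {..<m})" by (simp add: lessThan_Suc)
  also have "\<sigma> m = u" by (simp add: \<sigma>_def)
  also have "\<sigma> ` {..<m} = \<sigma>' ` {..<m}" by (rule im') simp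
  also have "insert u (\<sigma>' ` {..<m}) = U"
  proof -
    have "\<sigma>' ` {..<m} = U - {u}" using s'(1) unfolding bij_betw_def U'_def by simp
    thus ?thesis using u(1) by blast
  qed
  finally have im: "\<sigma> ` {..<Suc m} = U" .
  have "bij_betw \<sigma> {..<Suc m} U"
    unfolding bij_betw_def using im A(2) by (simp add: inj_on_iff_eq_card)
  moreover have "\<forall>I\<in>C. \<sigma> ` {..<card I} = I"
  proof
    fix I assume I: "I \<in> C"
    show "\<sigma> ` {..<card I} = I"
    proof (cases "I = U")
      case True thus ?thesis using im A(2) by simp
    next
      case False
      hence I': "I \<in> C'" using I by (simp add: C'_def)
      have "card I \<le> m" using card_mono[of U' I] C'U' I' A(1) cU' unfolding U'_def by blast
      thus ?thesis using im' s'(2) I' by simp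
    qed
  qed
  ultimately show ?case by blast
qed

context tz begin

lemma bez1: "\<exists>q. (\<Sum>i<k. q i * l i) = 1"
  using bez[where m=k and f=l] red unfolding reduced_def by simp

definition q0 :: "nat \<Rightarrow> int" where "q0 = (SOME q. (\<Sum>i<k. q i * l i) = 1)"

lemma q0: "(\<Sum>i<k. q0 i * l i) = 1" unfolding q0_def using someI_ex[OF bez1] .

definition lift :: "int \<Rightarrow> nat \<Rightarrow> int" where "lift x = comb k (\<lambda>i. x * q0 i)"

lemma lift_Lam: "lift x \<in> Lam k" unfolding lift_def using Lam_comb by blast

lemma phi_lift: assumes "x \<in> {0..<n}" shows "phi (lift x) = x"
proof -
  have "(\<Sum>i<k. x * q0 i * l i) = x * (\<Sum>i<k. q0 i * l i)"
    by (simp add: sum_distrib_left mult.assoc)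
  thus ?thesis using assms q0 by (simp add: lift_def phi_comb)
qed

lemma aset_Lam: "I \<subseteq> {..<k} \<Longrightarrow> aset k I \<in> Lam k"
  using aset_comb Lam_comb by metis

lemma phi_aset: assumes "I \<subseteq> {..<k}" shows "phi (aset k I) = (\<Sum>i\<in>I. l i) mod n"
proof -
  have "(\<Sum>i<k. (if i \<in> I then 1 else 0) * l i) = (\<Sum>i\<in>{..<k}. if i \<in> I then l i else 0)"
    by (rule sum.cong) auto
  also have "\<dots> = (\<Sum>i\<in>{..<k} \<inter> I. l i)" by (simp add: sum.inter_restrict)
  also have "{..<k} \<inter> I = I" using assms by blast
  finally show ?thesis using assms by (simp add: aset_comb phi_comb)
qed

lemma phi_vadd_aset: assumes "z \<in> Lam k" "I \<subseteq> {..<k}"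
  shows "phi (vadd z (aset k I)) = (phi z + (\<Sum>i\<in>I. l i)) mod n"
  using phi_add[OF assms(1) aset_Lam[OF assms(2)]] phi_aset[OF assms(2)]
  by (simp add: mod_add_right_eq)

lemma delone_elim:
  assumes "T \<in> delone k"
  obtains z C where "T = (\<lambda>I. vadd z (aset k I)) ` C" "z \<in> Lam k" "C \<noteq> {}"
    "\<forall>I\<in>C. I \<subset> {..<k}" "\<forall>I\<in>C. \<forall>J\<in>C. I \<subseteq> J \<or> J \<subseteq> I"
  using assms unfolding delone_def mem_Collect_eq by (elim exE conjE) blast

lemma delone_intro:
  assumes "z \<in> Lam k" "C \<noteq> {}" "\<forall>I\<in>C. I \<subset> {..<k}" "\<forall>I\<in>C. \<forall>J\<in>C. I \<subseteq> J \<or> J \<subseteq> I"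
  shows "(\<lambda>I. vadd z (aset k I)) ` C \<in> delone k"
  unfolding delone_def mem_Collect_eq using assms by blast

lemma vadd_assoc: "vadd a (vadd b c) = vadd (vadd a b) c"
  by (simp add: vadd_def fun_eq_iff add.assoc)

lemma delone_trans: assumes "T \<in> delone k" "h \<in> Lam k" shows "vadd h ` T \<in> delone k"
proof -
  obtain z C where T: "T = (\<lambda>I. vadd z (aset k I)) ` C" "z \<in> Lam k" "C \<noteq> {}"
    "\<forall>I\<in>C. I \<subset> {..<k}" "\<forall>I\<in>C. \<forall>J\<in>C. I \<subseteq> J \<or> J \<subseteq> I"
    by (rule delone_elim[OF assms(1)])
  have e: "vadd h ` T = (\<lambda>I. vadd (vadd h z) (aset k I)) ` C"
    unfolding T(1) image_image vadd_assoc ..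
  show ?thesis unfolding e by (rule delone_intro[OF Lam_add[OF assms(2) T(2)] T(3,4,5)])
qed

lemma delone_fin: assumes "T \<in> delone k" shows "finite T" "T \<noteq> {}"
proof -
  obtain z C where T: "T = (\<lambda>I. vadd z (aset k I)) ` C" "C \<noteq> {}" "\<forall>I\<in>C. I \<subset> {..<k}"
    by (rule delone_elim[OF assms(1)])
  have "C \<subseteq> Pow {..<k}" using T(3) by blast
  hence "finite C" by (rule finite_subset) simp
  thus "finite T" using T(1) by simp
  show "T \<noteq> {}" using T(1,2) by simp
qed

lemma acts: "acts_freely_by_translations P (Lam k) (delone k)"
  unfolding acts_freely_by_translations_def
proof (rule conjI; (rule ballI)+)
  fix g assume gP: "g \<in> P"
  hence gL: "g \<in> Lam k" using P_Lam by blast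
  have ngL: "(\<lambda>i. - g i) \<in> Lam k" using Lam_neg[OF gL] .
  have c1: "\<And>a. vadd (\<lambda>i. - g i) (vadd g a) = a" by (simp add: vadd_def)
  have c2: "\<And>a. vadd g (vadd (\<lambda>i. - g i) a) = a" by (simp add: vadd_def)
  show "bij_betw (vadd g) (Lam k) (Lam k) \<and> (\<forall>S\<subseteq>Lam k. (S \<in> delone k) = (vadd g ` S \<in> delone k))"
  proof (rule conjI)
    show "bij_betw (vadd g) (Lam k) (Lam k)"
    proof (rule bij_betw_byWitness[where f' = "vadd (\<lambda>i. - g i)"])
      show "\<forall>a\<in>Lam k. vadd (\<lambda>i. - g i) (vadd g a) = a" using c1 by blast
      show "\<forall>a'\<in>Lam k. vadd g (vadd (\<lambda>i. - g i) a') = a'" using c2 by blast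
      show "vadd g ` Lam k \<subseteq> Lam k" using Lam_add[OF gL] by blast
      show "vadd (\<lambda>i. - g i) ` Lam k \<subseteq> Lam k" using Lam_add[OF ngL] by blast
    qed
  next
    show "\<forall>S\<subseteq>Lam k. (S \<in> delone k) = (vadd g ` S \<in> delone k)"
    proof (intro allI impI)
    fix S assume "S \<subseteq> Lam k"
    show "(S \<in> delone k) = (vadd g ` S \<in> delone k)"
    proof
      assume "S \<in> delone k" thus "vadd g ` S \<in> delone k" using delone_trans gL by blast
    next
      assume "vadd g ` S \<in> delone k"
      from delone_trans[OF this ngL] have "vadd (\<lambda>i. - g i) ` vadd g ` S \<in> delone k" .
      moreover have "vadd (\<lambda>i. - g i) ` vadd g ` S = S" unfolding image_image c1 by simp
      ultimately show "S \<in> delone k" by simp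
    qed
    qed
  qed
next
  fix g S assume gP: "g \<in> P" and SD: "S \<in> delone k"
  show "vadd g ` S = S \<longrightarrow> g = (\<lambda>i. 0)"
  proof
    assume hfix: "vadd g ` S = S"
    have fin: "finite S" and ne: "S \<noteq> {}" using delone_fin[OF SD] by auto
    have inj: "inj_on (vadd g) S" by (rule inj_onI) (simp add: vadd_def fun_eq_iff)
    show "g = (\<lambda>i. 0)"
    proof
      fix j
      have "(\<Sum>s\<in>S. s j) = (\<Sum>s\<in>vadd g ` S. s j)" using hfix by simp
      also have "\<dots> = (\<Sum>s\<in>S. vadd g s j)" using sum.reindex[OF inj] by simp
      also have "\<dots> = (\<Sum>s\<in>S. s j) + of_nat (card S) * g j" by (simp add: vadd_def sum.distrib)
      finally have "of_nat (card S) * g j = 0" by simp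
      moreover have "card S > 0" using fin ne by (simp add: card_gt_0_iff)
      ultimately show "g j = 0" by simp
    qed
  qed
qed

end

context tz begin

lemma orbit_lift: assumes "s \<in> {0..<n}" "t \<in> Lam k"
  shows "orbit P (lift s) = orbit P t \<longleftrightarrow> s = phi t"
  using orbit_eq[OF lift_Lam assms(2)] phi_lift[OF assms(1)] by simp

lemma perm_sum: assumes "\<sigma> permutes {..<k}" "m \<le> k"
  shows "(\<Sum>i\<in>\<sigma> ` {..<m}. l i) = (\<Sum>j<m. l (\<sigma> j))"
proof -
  have "inj_on \<sigma> {..<m}" using permutes_inj[OF assms(1)] by (rule inj_on_subset) simp
  thus ?thesis by (simp add: sum.reindex)
qed

lemma perm_sub: assumes "\<sigma> permutes {..<k}" "m \<le> k" shows "\<sigma> ` {..<m} \<subseteq> {..<k}"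
proof
  fix y assume "y \<in> \<sigma> ` {..<m}"
  then obtain j where "j < m" "y = \<sigma> j" by blast
  thus "y \<in> {..<k}" using permutes_in_image[OF assms(1), of j] assms(2) by simp
qed

lemma perm_card: assumes "\<sigma> permutes {..<k}" "m \<le> k" shows "card (\<sigma> ` {..<m}) = m"
proof -
  have "inj_on \<sigma> {..<m}" using permutes_inj[OF assms(1)] by (rule inj_on_subset) simp
  thus ?thesis by (simp add: card_image)
qed

lemma iso_fwd:
  assumes S: "S \<subseteq> {0..<n}" "S \<in> tonn n k l"
  shows "(\<lambda>x. orbit P (lift x)) ` S \<in> {orbit P ` T |T. T \<in> delone k}"
proof -
  obtain x \<sigma> where x: "x \<in> {0..<n}" and sg: "\<sigma> permutes {..<k}" and Sne: "S \<noteq> {}"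
    and Sm: "S \<subseteq> tonn_max n k l x \<sigma>"
    using S(2) unfolding tonn_def by blast
  define val where "val = (\<lambda>m. (x + (\<Sum>j<m. l (\<sigma> j))) mod n)"
  have Sval: "\<And>s. s \<in> S \<Longrightarrow> \<exists>m<k. s = val m"
    using Sm unfolding tonn_max_def val_def by blast
  define M where "M = {m. m < k \<and> val m \<in> S}"
  define C where "C = (\<lambda>m. \<sigma> ` {..<m}) ` M"
  define z where "z = lift x"
  define T where "T = (\<lambda>I. vadd z (aset k I)) ` C"
  have zL: "z \<in> Lam k" by (simp add: z_def lift_Lam)
  have phiz: "phi z = x" using phi_lift[OF x] by (simp add: z_def)
  have CI: "\<forall>I\<in>C. I \<subset> {..<k}"
  proof
    fix I assume "I \<in> C"
    then obtain m where m: "m < k" "I = \<sigma> ` {..<m}" unfolding C_def M_def by blast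
    have "I \<subseteq> {..<k}" using perm_sub[OF sg] m by simp
    moreover have "card I < card {..<k}" using perm_card[OF sg] m by simp
    ultimately show "I \<subset> {..<k}" by (metis psubsetI card_lessThan less_irrefl)
  qed
  have Cch: "\<forall>I\<in>C. \<forall>J\<in>C. I \<subseteq> J \<or> J \<subseteq> I"
  proof (intro ballI)
    fix I J assume "I \<in> C" "J \<in> C"
    then obtain m m' where "I = \<sigma> ` {..<m}" "J = \<sigma> ` {..<m'}" unfolding C_def by blast
    thus "I \<subseteq> J \<or> J \<subseteq> I" by (cases "m \<le> m'") (auto intro: image_mono)
  qed
  have "M \<noteq> {}"
  proof -
    obtain s where "s \<in> S" using Sne by blast
    then obtain m where "m < k" "s = val m" using Sval by blast
    thus ?thesis using \<open>s \<in> S\<close> unfolding M_def by blast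
  qed
  hence Cne: "C \<noteq> {}" by (simp add: C_def)
  have TD: "T \<in> delone k" unfolding T_def by (rule delone_intro[OF zL Cne CI Cch])
  have phiT: "\<And>m. m < k \<Longrightarrow> phi (vadd z (aset k (\<sigma> ` {..<m}))) = val m"
  proof -
    fix m assume "m < k"
    hence "\<sigma> ` {..<m} \<subseteq> {..<k}" using perm_sub[OF sg] by simp
    thus "phi (vadd z (aset k (\<sigma> ` {..<m}))) = val m"
      using phi_vadd_aset[OF zL] perm_sum[OF sg] \<open>m < k\<close> phiz by (simp add: val_def)
  qed
  have tL: "\<And>m. m < k \<Longrightarrow> vadd z (aset k (\<sigma> ` {..<m})) \<in> Lam k"
    using Lam_add[OF zL aset_Lam] perm_sub[OF sg] by simp
  have "(\<lambda>x. orbit P (lift x)) ` S = orbit P ` T"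
  proof
    show "(\<lambda>x. orbit P (lift x)) ` S \<subseteq> orbit P ` T"
    proof
      fix w assume "w \<in> (\<lambda>x. orbit P (lift x)) ` S"
      then obtain s where s: "s \<in> S" "w = orbit P (lift s)" by blast
      then obtain m where m: "m < k" "s = val m" using Sval by blast
      have mM: "m \<in> M" using m s unfolding M_def by blast
      define t where "t = vadd z (aset k (\<sigma> ` {..<m}))"
      have "\<sigma> ` {..<m} \<in> C" unfolding C_def using mM by (rule imageI)
      hence "t \<in> T" unfolding T_def t_def by (rule imageI)
      moreover have "orbit P (lift s) = orbit P t"
      proof -
        have "s \<in> {0..<n}" using S(1) s(1) by blast
        thus ?thesis using orbit_lift[OF _ tL[OF m(1)]] phiT[OF m(1)] m(2) unfolding t_def by simp
      qed
      ultimately show "w \<in> orbit P ` T" using s(2) by blast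
    qed
  next
    show "orbit P ` T \<subseteq> (\<lambda>x. orbit P (lift x)) ` S"
    proof
      fix w assume "w \<in> orbit P ` T"
      then obtain t where t: "t \<in> T" "w = orbit P t" by blast
      from t(1) obtain I where I: "I \<in> C" "t = vadd z (aset k I)" unfolding T_def by blast
      from I(1) obtain m where mM: "m \<in> M" and Im: "I = \<sigma> ` {..<m}" unfolding C_def by blast
      have tm: "t = vadd z (aset k (\<sigma> ` {..<m}))" using I(2) Im by simp
      have m: "m < k" "val m \<in> S" using mM unfolding M_def by auto
      have "orbit P (lift (val m)) = orbit P t"
      proof -
        have "val m \<in> {0..<n}" using S(1) m(2) by blast
        thus ?thesis using orbit_lift[OF _ tL[OF m(1)]] phiT[OF m(1)] unfolding tm by simp
      qed
      thus "w \<in> (\<lambda>x. orbit P (lift x)) ` S" using t(2) m(2) by (metis image_eqI)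
    qed
  qed
  thus ?thesis using TD by blast
qed

end

context tz begin

lemma iso_bwd:
  assumes S: "S \<subseteq> {0..<n}" "(\<lambda>x. orbit P (lift x)) ` S \<in> {orbit P ` T |T. T \<in> delone k}"
  shows "S \<in> tonn n k l"
proof -
  obtain T where TD: "T \<in> delone k" and eq: "(\<lambda>x. orbit P (lift x)) ` S = orbit P ` T"
    using S(2) by blast
  obtain z C where T: "T = (\<lambda>I. vadd z (aset k I)) ` C" "z \<in> Lam k" "C \<noteq> {}"
    "\<forall>I\<in>C. I \<subset> {..<k}" "\<forall>I\<in>C. \<forall>J\<in>C. I \<subseteq> J \<or> J \<subseteq> I"
    by (rule delone_elim[OF TD])
  have CU: "\<forall>I\<in>C. I \<subseteq> {..<k}" using T(4) by blast
  obtain \<sigma>0 where s0: "bij_betw \<sigma>0 {..<k} {..<k}" "\<forall>I\<in>C. \<sigma>0 ` {..<card I} = I"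
    using chain_perm[of "{..<k}" k C] CU T(5) by auto
  define \<sigma> where "\<sigma> = (\<lambda>x. if x < k then \<sigma>0 x else x)"
  have "bij_betw \<sigma> {..<k} {..<k}"
    using s0(1) by (rule bij_betw_cong[THEN iffD1, rotated]) (simp add: \<sigma>_def)
  hence sg: "\<sigma> permutes {..<k}" by (rule bij_imp_permutes) (simp add: \<sigma>_def)
  have cardI: "\<And>I. I \<in> C \<Longrightarrow> card I < k"
  proof -
    fix I assume "I \<in> C"
    hence "I \<subset> {..<k}" using T(4) by blast
    thus "card I < k" using psubset_card_mono[of "{..<k}" I] by simp
  qed
  have sI: "\<And>I. I \<in> C \<Longrightarrow> \<sigma> ` {..<card I} = I"
  proof -
    fix I assume I: "I \<in> C"
    have "\<sigma> ` {..<card I} = \<sigma>0 ` {..<card I}" using cardI[OF I] by (auto simp: \<sigma>_def)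
    thus "\<sigma> ` {..<card I} = I" using s0(2) I by simp
  qed
  define x where "x = phi z"
  have x: "x \<in> {0..<n}" using phi_range[of z] by (simp add: x_def)
  have "S \<subseteq> tonn_max n k l x \<sigma>"
  proof
    fix s assume s: "s \<in> S"
    hence "orbit P (lift s) \<in> orbit P ` T" using eq by blast
    then obtain t where t: "t \<in> T" "orbit P (lift s) = orbit P t" by blast
    from t(1) obtain I where I: "I \<in> C" "t = vadd z (aset k I)" unfolding T(1) by blast
    have IU: "I \<subseteq> {..<k}" using CU I(1) by blast
    have tL: "t \<in> Lam k" using Lam_add[OF T(2) aset_Lam[OF IU]] I(2) by simp
    have "s = phi t" using orbit_lift[OF _ tL] S(1) s t(2) by blast
    also have "\<dots> = (x + (\<Sum>i\<in>I. l i)) mod n" using phi_vadd_aset[OF T(2) IU] I(2) x_def by simp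
    also have "(\<Sum>i\<in>I. l i) = (\<Sum>j<card I. l (\<sigma> j))"
      using perm_sum[OF sg, of "card I"] cardI[OF I(1)] sI[OF I(1)] by simp
    finally show "s \<in> tonn_max n k l x \<sigma>" unfolding tonn_max_def using cardI[OF I(1)] by blast
  qed
  moreover have "S \<noteq> {}"
  proof
    assume "S = {}"
    hence "orbit P ` T = {}" using eq by simp
    thus False using T(1,3) by simp
  qed
  ultimately show ?thesis unfolding tonn_def using x sg by blast
qed

lemma iso: "simplicial_iso {0..<n} (tonn n k l) (quot_vertices P (Lam k)) (quot_simplices P (delone k))
   (\<lambda>x. orbit P (lift x))"
  unfolding simplicial_iso_def quot_vertices_def quot_simplices_def
proof (intro conjI allI impI)
  show "bij_betw (\<lambda>x. orbit P (lift x)) {0..<n} (orbit P ` Lam k)"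
    unfolding bij_betw_def
  proof
    show "inj_on (\<lambda>x. orbit P (lift x)) {0..<n}"
    proof (rule inj_onI)
      fix x y assume xy: "x \<in> {0..<n}" "y \<in> {0..<n}" "orbit P (lift x) = orbit P (lift y)"
      hence "x = phi (lift y)" using orbit_lift[OF xy(1) lift_Lam] by simp
      thus "x = y" using phi_lift[OF xy(2)] by simp
    qed
    show "(\<lambda>x. orbit P (lift x)) ` {0..<n} = orbit P ` Lam k"
    proof
      show "(\<lambda>x. orbit P (lift x)) ` {0..<n} \<subseteq> orbit P ` Lam k" using lift_Lam by blast
      show "orbit P ` Lam k \<subseteq> (\<lambda>x. orbit P (lift x)) ` {0..<n}"
      proof
        fix w assume "w \<in> orbit P ` Lam k"
        then obtain t where t: "t \<in> Lam k" "w = orbit P t" by blast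
        have p: "phi t \<in> {0..<n}" using phi_range[of t] by simp
        have "orbit P (lift (phi t)) = orbit P t" using orbit_lift[OF p t(1)] by simp
        thus "w \<in> (\<lambda>x. orbit P (lift x)) ` {0..<n}" using p t(2) by (metis image_eqI)
      qed
    qed
  qed
next
  fix S assume S: "S \<subseteq> {0..<n}"
  show "(S \<in> tonn n k l) = ((\<lambda>x. orbit P (lift x)) ` S \<in> {orbit P ` S |S. S \<in> delone k})"
    using iso_fwd[OF S] iso_bwd[OF S] by blast
qed

end

context tz begin

lemma sumI_bounds: assumes "I \<subseteq> {..<k}" "I \<noteq> {}"
  shows "0 < (\<Sum>i\<in>I. l i)" "(\<Sum>i\<in>I. l i) \<le> n"
proof -
  have fI: "finite I" using assms(1) finite_subset by blast
  show "0 < (\<Sum>i\<in>I. l i)" using fI assms lpos by (intro sum_pos) auto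
  have "(\<Sum>i\<in>I. l i) \<le> (\<Sum>i\<in>{..<k}. l i)"
    using assms(1) lpos by (intro sum_mono2) (auto intro: less_imp_le)
  thus "(\<Sum>i\<in>I. l i) \<le> n" by (simp add: ndef)
qed

lemma sum_uniq:
  assumes "I \<subseteq> {..<k}" "I \<noteq> {}" "J \<subseteq> {..<k}" "J \<noteq> {}"
    "(\<Sum>i\<in>I. l i) mod n = (\<Sum>i\<in>J. l i) mod n" "(\<Sum>i\<in>I. l i) mod n \<noteq> 0"
  shows "I = J"
proof -
  have bI: "0 < (\<Sum>i\<in>I. l i)" "(\<Sum>i\<in>I. l i) \<le> n" using sumI_bounds[OF assms(1,2)] by auto
  have bJ: "0 < (\<Sum>i\<in>J. l i)" "(\<Sum>i\<in>J. l i) \<le> n" using sumI_bounds[OF assms(3,4)] by auto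
  have "(\<Sum>i\<in>I. l i) \<noteq> n" using assms(6) by auto
  hence mI: "(\<Sum>i\<in>I. l i) mod n = (\<Sum>i\<in>I. l i)" using bI by simp
  have "(\<Sum>i\<in>J. l i) \<noteq> n" using assms(5,6) by auto
  hence mJ: "(\<Sum>i\<in>J. l i) mod n = (\<Sum>i\<in>J. l i)" using bJ by simp
  have "(\<Sum>i\<in>I. l i) = (\<Sum>i\<in>J. l i)" using assms(5) mI mJ by simp
  thus ?thesis using gen assms(1,3) unfolding generic_def by blast
qed

lemma omega_eq:
  assumes "I \<subseteq> {..<k}" "I \<noteq> {}" "(v - u) mod n = (\<Sum>i\<in>I. l i) mod n" "(v - u) mod n \<noteq> 0"
  shows "omega n k l u v = aset k I"
proof -
  have "(THE I. I \<subseteq> {..<k} \<and> I \<noteq> {} \<and> (v - u) mod n = (\<Sum>j\<in>I. l j) mod n) = I"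
  proof (rule the_equality)
    show "I \<subseteq> {..<k} \<and> I \<noteq> {} \<and> (v - u) mod n = (\<Sum>j\<in>I. l j) mod n" using assms by simp
  next
    fix J assume "J \<subseteq> {..<k} \<and> J \<noteq> {} \<and> (v - u) mod n = (\<Sum>j\<in>J. l j) mod n"
    thus "J = I" using sum_uniq[OF assms(1,2)] assms(3,4) by metis
  qed
  thus ?thesis unfolding omega_def by simp
qed

definition val :: "int \<Rightarrow> (nat \<Rightarrow> nat) \<Rightarrow> nat \<Rightarrow> int" where
  "val x \<sigma> m = (x + (\<Sum>j<m. l (\<sigma> j))) mod n"

lemma val_diff: assumes "m1 \<le> m2"
  shows "(val x \<sigma> m2 - val x \<sigma> m1) mod n = (\<Sum>j\<in>{m1..<m2}. l (\<sigma> j)) mod n"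
proof -
  have "(\<Sum>j<m2. l (\<sigma> j)) = (\<Sum>j<m1. l (\<sigma> j)) + (\<Sum>j\<in>{m1..<m2}. l (\<sigma> j))"
    using sum.atLeastLessThan_concat[of 0 m1 m2 "\<lambda>j. l (\<sigma> j)"] assms
    by (simp add: atLeast0LessThan)
  thus ?thesis unfolding val_def by (simp add: mod_diff_eq)
qed

lemma omega_ex:
  assumes "u \<in> {0..<n}" "v \<in> {0..<n}" "u < v" "{u, v} \<in> tonn n k l"
  shows "\<exists>I. I \<subseteq> {..<k} \<and> I \<noteq> {} \<and> (v - u) mod n = (\<Sum>i\<in>I. l i) mod n"
proof -
  obtain x \<sigma> where sg: "\<sigma> permutes {..<k}" and sub: "{u, v} \<subseteq> tonn_max n k l x \<sigma>"
    using assms(4) unfolding tonn_def by blast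
  obtain m1 where m1: "m1 < k" "u = val x \<sigma> m1" using sub unfolding tonn_max_def val_def by blast
  obtain m2 where m2: "m2 < k" "v = val x \<sigma> m2" using sub unfolding tonn_max_def val_def by blast
  have inj: "inj_on \<sigma> {..<k}" using permutes_inj[OF sg] by (rule inj_on_subset) simp
  show ?thesis
  proof (cases "m1 \<le> m2")
    case True
    define I where "I = \<sigma> ` {m1..<m2}"
    have "m1 \<noteq> m2" using m1 m2 assms(3) by auto
    hence "m1 < m2" using True by simp
    hence "I \<noteq> {}" by (simp add: I_def)
    moreover have "I \<subseteq> {..<k}" unfolding I_def using perm_sub[OF sg, of m2] m2(1)
      by (auto simp: image_subset_iff)
    moreover have "(\<Sum>i\<in>I. l i) = (\<Sum>j\<in>{m1..<m2}. l (\<sigma> j))" unfolding I_def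
      by (rule sum.reindex[unfolded comp_def]) (rule inj_on_subset[OF inj], use m2 in auto)
    ultimately show ?thesis using val_diff[OF True, of x \<sigma>] m1 m2 by metis
  next
    case False
    define I0 where "I0 = \<sigma> ` {m2..<m1}"
    define I where "I = {..<k} - I0"
    have I0k: "I0 \<subseteq> {..<k}" unfolding I0_def using perm_sub[OF sg, of m1] m1(1)
      by (auto simp: image_subset_iff)
    have "\<sigma> m1 \<in> I"
    proof -
      have "\<sigma> m1 \<in> {..<k}" using permutes_in_image[OF sg] m1(1) by simp
      moreover have "\<sigma> m1 \<notin> I0"
      proof
        assume "\<sigma> m1 \<in> I0"
        then obtain j where j: "j \<in> {m2..<m1}" "\<sigma> m1 = \<sigma> j" unfolding I0_def by blast
        hence "m1 = j" using inj m1(1) inj_onD[OF inj] by auto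
        thus False using j by simp
      qed
      ultimately show ?thesis by (simp add: I_def)
    qed
    hence "I \<noteq> {}" by blast
    moreover have "I \<subseteq> {..<k}" by (simp add: I_def)
    moreover have "(v - u) mod n = (\<Sum>i\<in>I. l i) mod n"
    proof -
      have s0: "(\<Sum>i\<in>I0. l i) = (\<Sum>j\<in>{m2..<m1}. l (\<sigma> j))" unfolding I0_def
        by (rule sum.reindex[unfolded comp_def]) (rule inj_on_subset[OF inj], use m1 in auto)
      have "(\<Sum>i\<in>I. l i) = n - (\<Sum>i\<in>I0. l i)"
        unfolding I_def ndef using I0k by (simp add: sum_diff)
      hence e: "(\<Sum>i\<in>I. l i) = n - (\<Sum>j\<in>{m2..<m1}. l (\<sigma> j))" using s0 by simp
      have "(u - v) mod n = (\<Sum>j\<in>{m2..<m1}. l (\<sigma> j)) mod n"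
        using val_diff[of m2 m1 x \<sigma>] False m1 m2 by simp
      hence "(- (v - u)) mod n = (\<Sum>j\<in>{m2..<m1}. l (\<sigma> j)) mod n" by simp
      hence "(v - u) mod n = (- (\<Sum>j\<in>{m2..<m1}. l (\<sigma> j))) mod n"
        by (metis minus_minus mod_minus_eq)
      also have "\<dots> = (n - (\<Sum>j\<in>{m2..<m1}. l (\<sigma> j))) mod n"
        by (metis add.commute diff_conv_add_uminus mod_add_self2)
      finally show ?thesis using e by simp
    qed
    ultimately show ?thesis by blast
  qed
qed

end

context tz begin

definition Jof :: "int \<Rightarrow> int \<Rightarrow> nat set" where
  "Jof u v = (SOME I. I \<subseteq> {..<k} \<and> I \<noteq> {} \<and> (v - u) mod n = (\<Sum>i\<in>I. l i) mod n)"

lemma Jof_edge: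
  assumes "u \<in> {0..<n}" "v \<in> {0..<n}" "u < v" "{u, v} \<in> tonn n k l"
  shows "Jof u v \<subseteq> {..<k}" "Jof u v \<noteq> {}" "(v - u) mod n = (\<Sum>i\<in>Jof u v. l i) mod n"
    "omega n k l u v = aset k (Jof u v)"
proof -
  have "Jof u v \<subseteq> {..<k} \<and> Jof u v \<noteq> {} \<and> (v - u) mod n = (\<Sum>i\<in>Jof u v. l i) mod n"
    unfolding Jof_def using someI_ex[OF omega_ex[OF assms]] .
  thus J: "Jof u v \<subseteq> {..<k}" "Jof u v \<noteq> {}" "(v - u) mod n = (\<Sum>i\<in>Jof u v. l i) mod n" by auto
  have "(v - u) mod n \<noteq> 0" using assms(1-3) by auto
  thus "omega n k l u v = aset k (Jof u v)" using omega_eq[OF J] by blast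
qed

definition ind :: "nat set \<Rightarrow> nat \<Rightarrow> int" where "ind I i = (if i \<in> I then 1 else 0)"

lemma ind_sum: "I \<subseteq> {..<k} \<Longrightarrow> (\<Sum>i<k. ind I i * l i) = (\<Sum>i\<in>I. l i)"
proof -
  assume a: "I \<subseteq> {..<k}"
  have "(\<Sum>i<k. ind I i * l i) = (\<Sum>i\<in>{..<k}. if i \<in> I then l i else 0)"
    by (rule sum.cong) (auto simp: ind_def)
  also have "\<dots> = (\<Sum>i\<in>{..<k} \<inter> I. l i)" by (simp add: sum.inter_restrict)
  also have "{..<k} \<inter> I = I" using a by blast
  finally show ?thesis .
qed

lemma LamL_sub: assumes c: "c \<in> tonn_cycles n k l" shows "omega_eval n k l c \<in> P"
proof -
  let ?U = "{0..<n}"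
  have supp: "\<And>u v. c (u, v) \<noteq> 0 \<Longrightarrow> u \<in> ?U \<and> v \<in> ?U \<and> u < v \<and> {u, v} \<in> tonn n k l"
    using c unfolding tonn_cycles_def by blast
  have bd: "\<And>w. w \<in> ?U \<Longrightarrow> (\<Sum>u\<in>?U. c (u, w)) - (\<Sum>v\<in>?U. c (w, v)) = 0"
    using c unfolding tonn_cycles_def by blast
  define p where "p = (\<lambda>i. \<Sum>u\<in>?U. \<Sum>v\<in>?U. c (u, v) * ind (Jof u v) i)"
  have e1: "\<And>u v j. c (u, v) * omega n k l u v j = (\<Sum>i<k. c (u, v) * ind (Jof u v) i * avec k i j)"
  proof -
    fix u v j
    show "c (u, v) * omega n k l u v j = (\<Sum>i<k. c (u, v) * ind (Jof u v) i * avec k i j)"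
    proof (cases "c (u, v) = 0")
      case False
      note E = Jof_edge[OF conjunct1[OF supp[OF False]] conjunct1[OF conjunct2[OF supp[OF False]]]
          conjunct1[OF conjunct2[OF conjunct2[OF supp[OF False]]]]
          conjunct2[OF conjunct2[OF conjunct2[OF supp[OF False]]]]]
      have "omega n k l u v j = comb k (ind (Jof u v)) j"
        using E(4) aset_comb[OF E(1)] by (simp add: ind_def[abs_def])
      thus ?thesis by (simp add: comb_def sum_distrib_left mult.assoc)
    qed simp
  qed
  have e2: "\<And>u v. n dvd (c (u, v) * (\<Sum>i<k. ind (Jof u v) i * l i) - c (u, v) * (v - u))"
  proof -
    fix u v
    show "n dvd (c (u, v) * (\<Sum>i<k. ind (Jof u v) i * l i) - c (u, v) * (v - u))"
    proof (cases "c (u, v) = 0")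
      case False
      note E = Jof_edge[OF conjunct1[OF supp[OF False]] conjunct1[OF conjunct2[OF supp[OF False]]]
          conjunct1[OF conjunct2[OF conjunct2[OF supp[OF False]]]]
          conjunct2[OF conjunct2[OF conjunct2[OF supp[OF False]]]]]
      have "(\<Sum>i<k. ind (Jof u v) i * l i) mod n = (v - u) mod n" using ind_sum[OF E(1)] E(3) by simp
      hence "n dvd ((\<Sum>i<k. ind (Jof u v) i * l i) - (v - u))" by (simp add: mod_eq_dvd_iff)
      hence "n dvd c (u, v) * ((\<Sum>i<k. ind (Jof u v) i * l i) - (v - u))" by simp
      thus ?thesis by (simp add: right_diff_distrib)
    qed simp
  qed
  have ev: "omega_eval n k l c = comb k p"
  proof
    fix j
    have "omega_eval n k l c j = (\<Sum>u\<in>?U. \<Sum>v\<in>?U. \<Sum>i<k. c (u, v) * ind (Jof u v) i * avec k i j)"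
      unfolding omega_eval_def using e1 by simp
    also have "\<dots> = (\<Sum>u\<in>?U. \<Sum>i<k. \<Sum>v\<in>?U. c (u, v) * ind (Jof u v) i * avec k i j)"
      by (rule sum.cong[OF refl], rule sum.swap)
    also have "\<dots> = (\<Sum>i<k. \<Sum>u\<in>?U. \<Sum>v\<in>?U. c (u, v) * ind (Jof u v) i * avec k i j)"
      by (rule sum.swap)
    also have "\<dots> = (\<Sum>i<k. p i * avec k i j)"
      unfolding p_def by (simp add: sum_distrib_right)
    finally show "omega_eval n k l c j = comb k p j" by (simp add: comb_def)
  qed
  have s1: "(\<Sum>i<k. p i * l i) = (\<Sum>u\<in>?U. \<Sum>v\<in>?U. c (u, v) * (\<Sum>i<k. ind (Jof u v) i * l i))"
  proof -
    have "(\<Sum>i<k. p i * l i) = (\<Sum>i<k. \<Sum>u\<in>?U. \<Sum>v\<in>?U. c (u, v) * ind (Jof u v) i * l i)"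
      unfolding p_def by (simp add: sum_distrib_right)
    also have "\<dots> = (\<Sum>u\<in>?U. \<Sum>i<k. \<Sum>v\<in>?U. c (u, v) * ind (Jof u v) i * l i)"
      by (rule sum.swap)
    also have "\<dots> = (\<Sum>u\<in>?U. \<Sum>v\<in>?U. \<Sum>i<k. c (u, v) * ind (Jof u v) i * l i)"
      by (rule sum.cong[OF refl], rule sum.swap)
    also have "\<dots> = (\<Sum>u\<in>?U. \<Sum>v\<in>?U. c (u, v) * (\<Sum>i<k. ind (Jof u v) i * l i))"
      by (simp add: sum_distrib_left mult.assoc)
    finally show ?thesis .
  qed
  have D: "(\<Sum>u\<in>?U. \<Sum>v\<in>?U. c (u, v) * (v - u)) = 0"
  proof -
    have a: "(\<Sum>u\<in>?U. \<Sum>v\<in>?U. c (u, v) * v) = (\<Sum>w\<in>?U. w * (\<Sum>u\<in>?U. c (u, w)))"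
      by (subst sum.swap) (simp add: sum_distrib_left mult.commute)
    have b: "(\<Sum>u\<in>?U. \<Sum>v\<in>?U. c (u, v) * u) = (\<Sum>w\<in>?U. w * (\<Sum>v\<in>?U. c (w, v)))"
      by (simp add: sum_distrib_left mult.commute)
    have "(\<Sum>u\<in>?U. \<Sum>v\<in>?U. c (u, v) * (v - u))
        = (\<Sum>u\<in>?U. \<Sum>v\<in>?U. c (u, v) * v) - (\<Sum>u\<in>?U. \<Sum>v\<in>?U. c (u, v) * u)"
      by (simp add: right_diff_distrib sum_subtractf)
    also have "\<dots> = (\<Sum>w\<in>?U. w * ((\<Sum>u\<in>?U. c (u, w)) - (\<Sum>v\<in>?U. c (w, v))))"
      unfolding a b by (simp add: right_diff_distrib sum_subtractf)
    also have "\<dots> = 0" using bd by simp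
    finally show ?thesis .
  qed
  have "n dvd ((\<Sum>u\<in>?U. \<Sum>v\<in>?U. c (u, v) * (\<Sum>i<k. ind (Jof u v) i * l i))
            - (\<Sum>u\<in>?U. \<Sum>v\<in>?U. c (u, v) * (v - u)))"
    unfolding sum_subtractf[symmetric] by (intro dvd_sum e2)
  hence "n dvd (\<Sum>i<k. p i * l i)" using s1 D by simp
  then obtain p0 where "(\<Sum>i<k. p i * l i) = n * p0" by (elim dvdE)
  hence "(\<Sum>i<k. p i * l i) = p0 * n" by simp
  thus ?thesis unfolding ev P_def by blast
qed

end

lemma sum_list_rep:
  "sum_list (map (f :: nat \<Rightarrow> int) (concat (map (\<lambda>i. replicate (r i) i) [0..<m]))) = (\<Sum>i<m. of_nat (r i) * f i)"
  by (induction m) (simp_all add: sum_list_replicate)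

lemma sum_pair_delta:
  assumes "x \<in> A" "y \<in> B" "finite A" "finite B"
  shows "(\<Sum>u\<in>A. \<Sum>v\<in>B. (if (u, v) = (x, y) then a else 0) * f u v) = a * (f x y :: int)"
proof -
  have "(\<Sum>u\<in>A. \<Sum>v\<in>B. (if (u, v) = (x, y) then a else 0) * f u v)
      = (\<Sum>u\<in>A. if u = x then (\<Sum>v\<in>B. if v = y then a * f u v else 0) else 0)"
  proof (rule sum.cong[OF refl])
    fix u assume "u \<in> A"
    show "(\<Sum>v\<in>B. (if (u, v) = (x, y) then a else 0) * f u v)
       = (if u = x then (\<Sum>v\<in>B. if v = y then a * f u v else 0) else 0)"
    proof (cases "u = x")
      case True
      have "(\<Sum>v\<in>B. (if (u, v) = (x, y) then a else 0) * f u v) = (\<Sum>v\<in>B. if v = y then a * f u v else 0)"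
        by (rule sum.cong) (auto simp: True)
      thus ?thesis using True by simp
    qed simp
  qed
  also have "\<dots> = (\<Sum>v\<in>B. if v = y then a * f x v else 0)" using assms by simp
  also have "\<dots> = a * f x y" using assms by simp
  finally show ?thesis .
qed

context tz begin

definition nx :: "int \<Rightarrow> nat \<Rightarrow> int" where "nx x i = (x + l i) mod n"

definition edge :: "int \<Rightarrow> nat \<Rightarrow> int \<times> int \<Rightarrow> int" where
  "edge x i = (if x < nx x i then (\<lambda>e. if e = (x, nx x i) then 1 else 0)
               else (\<lambda>e. if e = (nx x i, x) then -1 else 0))"

primrec walk :: "int \<Rightarrow> nat list \<Rightarrow> int \<times> int \<Rightarrow> int" where
  "walk x [] = (\<lambda>_. 0)"
| "walk x (i # is) = (\<lambda>e. edge x i e + walk (nx x i) is e)"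

primrec endp :: "int \<Rightarrow> nat list \<Rightarrow> int" where
  "endp x [] = x"
| "endp x (i # is) = endp (nx x i) is"

lemma nx_range: "nx x i \<in> {0..<n}" using npos by (simp add: nx_def)

lemma nx_ne: assumes "x \<in> {0..<n}" "i < k" shows "nx x i \<noteq> x"
proof
  assume "nx x i = x"
  hence "(x + l i) mod n = x mod n" using assms(1) by (simp add: nx_def)
  hence "n dvd l i" by (simp add: mod_eq_dvd_iff)
  thus False using l_lt_n[OF assms(2)] zdvd_imp_le by fastforce
qed

lemma endp_eq: assumes "x \<in> {0..<n}" shows "endp x is = (x + sum_list (map l is)) mod n"
  using assms
proof (induction "is" arbitrary: x)
  case Nil thus ?case by simp
next
  case (Cons i "is")
  have "endp x (i # is) = (nx x i + sum_list (map l is)) mod n" using Cons.IH[OF nx_range] by simp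
  also have "\<dots> = (x + sum_list (map l (i # is))) mod n" by (simp add: nx_def mod_add_left_eq add.assoc)
  finally show ?case .
qed

lemma edge_tonn: assumes "x \<in> {0..<n}" "i < k" shows "{x, nx x i} \<in> tonn n k l"
proof -
  define \<sigma> where "\<sigma> = Transposition.transpose 0 i"
  have sg: "\<sigma> permutes {..<k}" unfolding \<sigma>_def using kpos assms(2) by (intro permutes_swap_id) auto
  have "x \<in> tonn_max n k l x \<sigma>" unfolding tonn_max_def
    using assms(1) kpos by (intro CollectI exI[of _ 0]) simp
  moreover have "nx x i \<in> tonn_max n k l x \<sigma>" unfolding tonn_max_def
    using k2 by (intro CollectI exI[of _ 1]) (simp add: nx_def \<sigma>_def transpose_def)
  ultimately show ?thesis unfolding tonn_def using assms(1) sg by blast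
qed

lemma edge_supp: assumes "x \<in> {0..<n}" "i < k" "edge x i (a, b) \<noteq> 0"
  shows "a \<in> {0..<n} \<and> b \<in> {0..<n} \<and> a < b \<and> {a, b} \<in> tonn n k l"
proof (cases "x < nx x i")
  case True
  hence "(a, b) = (x, nx x i)" using assms(3) unfolding edge_def by (auto split: if_splits)
  thus ?thesis using True assms(1) nx_range edge_tonn[OF assms(1,2)] by auto
next
  case False
  hence "(a, b) = (nx x i, x)" using assms(3) unfolding edge_def by (auto split: if_splits)
  moreover have "nx x i < x" using False nx_ne[OF assms(1,2)] by simp
  moreover have "{nx x i, x} = {x, nx x i}" by blast
  ultimately show ?thesis using assms(1) nx_range edge_tonn[OF assms(1,2)] by auto
qed

lemma edge_bd: assumes "x \<in> {0..<n}" "i < k" "w \<in> {0..<n}"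
  shows "(\<Sum>u\<in>{0..<n}. edge x i (u, w)) - (\<Sum>v\<in>{0..<n}. edge x i (w, v))
       = (if w = nx x i then 1 else 0) - (if w = x then 1 else 0)"
proof (cases "x < nx x i")
  case True
  have "(\<Sum>u\<in>{0..<n}. edge x i (u, w)) = (\<Sum>u\<in>{0..<n}. if u = x then (if w = nx x i then 1 else 0) else 0)"
    by (rule sum.cong) (auto simp: edge_def True)
  also have "\<dots> = (if w = nx x i then 1 else 0)" using assms(1) by simp
  finally have a: "(\<Sum>u\<in>{0..<n}. edge x i (u, w)) = (if w = nx x i then 1 else 0)" .
  have "(\<Sum>v\<in>{0..<n}. edge x i (w, v)) = (\<Sum>v\<in>{0..<n}. if v = nx x i then (if w = x then 1 else 0) else 0)"
    by (rule sum.cong) (auto simp: edge_def True)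
  also have "\<dots> = (if w = x then 1 else 0)" using nx_range by simp
  finally show ?thesis using a by simp
next
  case False
  have "(\<Sum>u\<in>{0..<n}. edge x i (u, w)) = (\<Sum>u\<in>{0..<n}. if u = nx x i then (if w = x then -1 else 0) else 0)"
    by (rule sum.cong) (auto simp: edge_def False)
  also have "\<dots> = (if w = x then -1 else 0)" using nx_range by simp
  finally have a: "(\<Sum>u\<in>{0..<n}. edge x i (u, w)) = (if w = x then -1 else 0)" .
  have "(\<Sum>v\<in>{0..<n}. edge x i (w, v)) = (\<Sum>v\<in>{0..<n}. if v = x then (if w = nx x i then -1 else 0) else 0)"
    by (rule sum.cong) (auto simp: edge_def False)
  also have "\<dots> = (if w = nx x i then -1 else 0)" using assms(1) by simp
  finally show ?thesis using a by simp
qed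

lemma aset_single: "aset k {i} = avec k i" by (simp add: aset_def fun_eq_iff)

lemma aset_compl: assumes "i < k" shows "aset k ({..<k} - {i}) = (\<lambda>j. - avec k i j)"
proof
  fix j
  have "aset k ({..<k} - {i}) j = (\<Sum>i'<k. avec k i' j) - avec k i j"
    unfolding aset_def using assms by (simp add: sum_diff1)
  thus "aset k ({..<k} - {i}) j = - avec k i j" using avec_sum0 by simp
qed

lemma edge_omega: assumes "x \<in> {0..<n}" "i < k"
  shows "omega_eval n k l (edge x i) = avec k i"
proof (cases "x < nx x i")
  case True
  let ?y = "nx x i"
  have yr: "?y \<in> {0..<n}" by (rule nx_range)
  have m: "(?y - x) mod n = (\<Sum>j\<in>{i}. l j) mod n" by (simp add: nx_def mod_diff_left_eq)
  have "(?y - x) mod n \<noteq> 0" using True assms(1) yr by auto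
  hence om: "omega n k l x ?y = avec k i" using omega_eq[of "{i}" ?y x] m assms(2) aset_single by simp
  show ?thesis
  proof
    fix j
    have "omega_eval n k l (edge x i) j
        = (\<Sum>u\<in>{0..<n}. \<Sum>v\<in>{0..<n}. (if (u, v) = (x, ?y) then 1 else 0) * omega n k l u v j)"
      unfolding omega_eval_def edge_def using True by simp
    also have "\<dots> = omega n k l x ?y j" using sum_pair_delta[OF assms(1) yr] by simp
    finally show "omega_eval n k l (edge x i) j = avec k i j" using om by simp
  qed
next
  case False
  let ?y = "nx x i"
  have yr: "?y \<in> {0..<n}" by (rule nx_range)
  have lt: "?y < x" using False nx_ne[OF assms] by simp
  define I where "I = {..<k} - {i}"
  have Ik: "I \<subseteq> {..<k}" by (simp add: I_def)
  have "\<exists>j<k. j \<noteq> i" using k2 by (intro exI[of _ "if i = 0 then 1 else 0"]) auto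
  hence Ine: "I \<noteq> {}" by (auto simp: I_def)
  have sI: "(\<Sum>j\<in>I. l j) = n - l i" unfolding I_def ndef using assms(2) by (simp add: sum_diff1)
  have "(x - ?y) mod n = (x - (x + l i)) mod n" unfolding nx_def by (rule mod_diff_right_eq)
  also have "\<dots> = (- l i) mod n" by simp
  also have "\<dots> = (n - l i) mod n" by (metis add.commute diff_conv_add_uminus mod_add_self2)
  finally have m: "(x - ?y) mod n = (\<Sum>j\<in>I. l j) mod n" using sI by simp
  have "(x - ?y) mod n \<noteq> 0" using lt assms(1) yr by auto
  hence om: "omega n k l ?y x = (\<lambda>j. - avec k i j)"
    using omega_eq[OF Ik Ine m] aset_compl[OF assms(2)] by (simp add: I_def)
  show ?thesis
  proof
    fix j
    have "omega_eval n k l (edge x i) j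
        = (\<Sum>u\<in>{0..<n}. \<Sum>v\<in>{0..<n}. (if (u, v) = (?y, x) then -1 else 0) * omega n k l u v j)"
      unfolding omega_eval_def edge_def using False by simp
    also have "\<dots> = - omega n k l ?y x j" using sum_pair_delta[OF yr assms(1)] by simp
    finally show "omega_eval n k l (edge x i) j = avec k i j" using om by simp
  qed
qed

end

context tz begin

lemma walk_supp: assumes "x \<in> {0..<n}" "\<forall>i\<in>set is. i < k" "walk x is (a, b) \<noteq> 0"
  shows "a \<in> {0..<n} \<and> b \<in> {0..<n} \<and> a < b \<and> {a, b} \<in> tonn n k l"
  using assms
proof (induction "is" arbitrary: x)
  case Nil thus ?case by simp
next
  case (Cons i "is")
  show ?case
  proof (cases "edge x i (a, b) = 0")
    case True
    hence "walk (nx x i) is (a, b) \<noteq> 0" using Cons.prems(3) by simp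
    thus ?thesis using Cons.IH[OF nx_range] Cons.prems(2) by simp
  next
    case False
    have "i < k" using Cons.prems(2) by simp
    thus ?thesis using edge_supp[OF Cons.prems(1) _ False] by blast
  qed
qed

lemma walk_bd: assumes "x \<in> {0..<n}" "\<forall>i\<in>set is. i < k" "w \<in> {0..<n}"
  shows "(\<Sum>u\<in>{0..<n}. walk x is (u, w)) - (\<Sum>v\<in>{0..<n}. walk x is (w, v))
       = (if w = endp x is then 1 else 0) - (if w = x then 1 else 0)"
  using assms(1,2)
proof (induction "is" arbitrary: x)
  case Nil thus ?case by simp
next
  case (Cons i "is")
  have e: "(\<Sum>u\<in>{0..<n}. edge x i (u, w)) - (\<Sum>v\<in>{0..<n}. edge x i (w, v))
       = (if w = nx x i then 1 else 0) - (if w = x then 1 else 0)"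
    using edge_bd[OF Cons.prems(1) _ assms(3)] Cons.prems(2) by simp
  have r: "(\<Sum>u\<in>{0..<n}. walk (nx x i) is (u, w)) - (\<Sum>v\<in>{0..<n}. walk (nx x i) is (w, v))
       = (if w = endp (nx x i) is then 1 else 0) - (if w = nx x i then 1 else 0)"
    using Cons.IH[OF nx_range] Cons.prems(2) by simp
  show ?case using e r by (simp add: sum.distrib)
qed

lemma omega_eval_add: "omega_eval n k l (\<lambda>e. f e + g e) = (\<lambda>j. omega_eval n k l f j + omega_eval n k l g j)"
  unfolding omega_eval_def by (simp add: distrib_right sum.distrib fun_eq_iff)

lemma walk_omega: assumes "x \<in> {0..<n}" "\<forall>i\<in>set is. i < k"
  shows "omega_eval n k l (walk x is) = (\<lambda>j. sum_list (map (\<lambda>i. avec k i j) is))"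
  using assms
proof (induction "is" arbitrary: x)
  case Nil thus ?case by (simp add: omega_eval_def fun_eq_iff)
next
  case (Cons i "is")
  have "omega_eval n k l (walk x (i # is)) = (\<lambda>j. omega_eval n k l (edge x i) j + omega_eval n k l (walk (nx x i) is) j)"
    by (simp add: omega_eval_add)
  also have "\<dots> = (\<lambda>j. avec k i j + sum_list (map (\<lambda>i. avec k i j) is))"
    using edge_omega[OF Cons.prems(1)] Cons.IH[OF nx_range] Cons.prems(2) by simp
  finally show ?case by simp
qed

lemma P_sub_LamL: assumes "y \<in> P" shows "y \<in> LamL n k l"
proof -
  obtain p p0 where y: "y = comb k p" and pp: "(\<Sum>i<k. p i * l i) = p0 * n"
    using assms unfolding P_def by blast
  define t where "t = (\<Sum>i<k. \<bar>p i\<bar>)"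
  have pt: "\<And>i. i < k \<Longrightarrow> 0 \<le> p i + t"
  proof -
    fix i assume "i < k"
    hence "\<bar>p i\<bar> \<le> t" unfolding t_def by (intro member_le_sum) auto
    thus "0 \<le> p i + t" by linarith
  qed
  define r where "r = (\<lambda>i. nat (p i + t))"
  have rI: "\<And>i. i < k \<Longrightarrow> int (r i) = p i + t" using pt by (simp add: r_def)
  define "is" where "is = concat (map (\<lambda>i. replicate (r i) i) [0..<k])"
  have isk: "\<forall>i\<in>set is. i < k" by (auto simp: is_def)
  have zr: "(0::int) \<in> {0..<n}" using npos by simp
  have sl: "sum_list (map l is) = (\<Sum>i<k. (p i + t) * l i)"
    unfolding is_def sum_list_rep using rI by simp
  have "(\<Sum>i<k. (p i + t) * l i) = (\<Sum>i<k. p i * l i) + t * (\<Sum>i<k. l i)"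
    by (simp add: distrib_right sum.distrib sum_distrib_left)
  hence "(\<Sum>i<k. (p i + t) * l i) = (p0 + t) * n" using pp ndef by (simp add: algebra_simps)
  hence ep: "endp 0 is = 0" using endp_eq[OF zr] sl by simp
  define c where "c = walk 0 is"
  have "c \<in> tonn_cycles n k l"
    unfolding tonn_cycles_def
  proof (rule CollectI, rule conjI; (intro allI impI ballI)?)
    fix u v assume "c (u, v) \<noteq> 0"
    thus "u \<in> {0..<n} \<and> v \<in> {0..<n} \<and> u < v \<and> {u, v} \<in> tonn n k l"
      using walk_supp[OF zr isk] unfolding c_def by blast
  next
    fix w :: int assume "w \<in> {0..<n}"
    thus "(\<Sum>u\<in>{0..<n}. c (u, w)) - (\<Sum>v\<in>{0..<n}. c (w, v)) = 0"
      using walk_bd[OF zr isk] ep unfolding c_def by simp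
  qed
  moreover have "omega_eval n k l c = y"
  proof -
    have "omega_eval n k l c = (\<lambda>j. sum_list (map (\<lambda>i. avec k i j) is))"
      unfolding c_def by (rule walk_omega[OF zr isk])
    also have "\<dots> = (\<lambda>j. \<Sum>i<k. (p i + t) * avec k i j)"
      unfolding is_def sum_list_rep using rI by simp
    also have "\<dots> = comb k (\<lambda>i. p i + t)" by (simp add: comb_def fun_eq_iff)
    finally show ?thesis using y comb_shift by simp
  qed
  ultimately show ?thesis unfolding LamL_def by blast
qed

end

theorem proposition6p1:
  fixes k :: nat and l :: "nat \<Rightarrow> int" and n :: int
  assumes "k \<ge> 2"
    and "\<forall>i<k. l i > 0"
    and "generic k l"
    and "reduced k l"
    and "n = (\<Sum>i<k. l i)"
  shows "LamL n k l = {(\<lambda>j. \<Sum>i<k. p i * avec k i j) | p :: nat \<Rightarrow> int.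
                          \<exists>p0 :: int. (\<Sum>i<k. p i * l i) = p0 * n} \<and>
         free_abelian_rank (LamL n k l) (k - 1) \<and>
         acts_freely_by_translations (LamL n k l) (Lam k) (delone k) \<and>
         (\<exists>f. simplicial_iso {0..<n} (tonn n k l)
                (quot_vertices (LamL n k l) (Lam k)) (quot_simplices (LamL n k l) (delone k)) f)"
proof -
  interpret tz k l n using assms by unfold_locales
  have LP: "LamL n k l = P"
  proof
    show "LamL n k l \<subseteq> P" unfolding LamL_def using LamL_sub by blast
    show "P \<subseteq> LamL n k l" using P_sub_LamL by blast
  qed
  have Pset: "{(\<lambda>j. \<Sum>i<k. p i * avec k i j) | p :: nat \<Rightarrow> int.
                          \<exists>p0 :: int. (\<Sum>i<k. p i * l i) = p0 * n} = P"
    unfolding P_def comb_def ..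
  show ?thesis unfolding LP Pset using free_P acts iso by blast
qed

end
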